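(* The local complexity of the class of subgraphs of the square grid is $\Theta(n)$, and the local complexity of the class of induced subgraphs of the square grid is $\Theta(n)$.
   Context: The square grid is the infinite graph on $\mathbb{Z}^2$ with edges between points at Euclidean distance 1. All graphs are finite, simple, connected; $n$ is the number of vertices, with distinct identifiers in $\{1,\dots,\mathrm{poly}(n)\}$. A proof labeling scheme for a class $\mathcal{G}$ consists of a prover assigning a certificate (binary word) to each vertex of each $G\in\mathcal{G}$ and a local verifier where each vertex accepts or rejects based only on identifiers and certificates in its closed neighborhood; all vertices accept when $G\in\mathcal{G}$ with the prover's certificates, and when $G\notin\mathcal{G}$ some vertex rejects for every certificate assignment. The local complexity of $\mathcal{G}$ is the minimum, over such schemes, of the maximum certificate length used on $n$-vertex graphs of $\mathcal{G}$. *)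

theory Defs
  imports Main "HOL-Library.Landau_Symbols"
begin

definition grid_adj :: "int \<times> int \<Rightarrow> int \<times> int \<Rightarrow> bool" where
  "grid_adj p q \<longleftrightarrow> \<bar>fst p - fst q\<bar> + \<bar>snd p - snd q\<bar> = 1"

text \<open>A graph is given by its vertex set V (each vertex is its own identifier,
  hence identifiers are distinct) and a symmetric irreflexive edge relation E.\<close>
definition simple_graph :: "nat set \<Rightarrow> (nat \<Rightarrow> nat \<Rightarrow> bool) \<Rightarrow> bool" where
  "simple_graph V E \<longleftrightarrow> finite V \<and> V \<noteq> {} \<and>
     (\<forall>u v. E u v \<longrightarrow> u \<in> V \<and> v \<in> V) \<and>
     (\<forall>u v. E u v \<longrightarrow> E v u) \<and> (\<forall>v. \<not> E v v)"

definition connected_graph :: "nat set \<Rightarrow> (nat \<Rightarrow> nat \<Rightarrow> bool) \<Rightarrow> bool" where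
  "connected_graph V E \<longleftrightarrow> (\<forall>u\<in>V. \<forall>v\<in>V. (u, v) \<in> {(x, y). E x y}\<^sup>*)"

text \<open>Identifiers lie in {1..n^c}, where n is the number of vertices (poly(n) = n^c).\<close>
definition admissible :: "nat \<Rightarrow> nat set \<Rightarrow> (nat \<Rightarrow> nat \<Rightarrow> bool) \<Rightarrow> bool" where
  "admissible c V E \<longleftrightarrow> simple_graph V E \<and> connected_graph V E \<and> V \<subseteq> {1..card V ^ c}"

definition grid_subgraph :: "nat set \<Rightarrow> (nat \<Rightarrow> nat \<Rightarrow> bool) \<Rightarrow> bool" where
  "grid_subgraph V E \<longleftrightarrow>
     (\<exists>f :: nat \<Rightarrow> int \<times> int. inj_on f V \<and> (\<forall>u\<in>V. \<forall>v\<in>V. E u v \<longrightarrow> grid_adj (f u) (f v)))"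

definition grid_induced_subgraph :: "nat set \<Rightarrow> (nat \<Rightarrow> nat \<Rightarrow> bool) \<Rightarrow> bool" where
  "grid_induced_subgraph V E \<longleftrightarrow>
     (\<exists>f :: nat \<Rightarrow> int \<times> int. inj_on f V \<and> (\<forall>u\<in>V. \<forall>v\<in>V. E u v \<longleftrightarrow> grid_adj (f u) (f v)))"

text \<open>Local view of v: its identifier and certificate, plus identifiers and certificates
  of its neighbours (closed neighbourhood).\<close>
type_synonym view = "nat \<times> bool list \<times> (nat \<times> bool list) set"

definition local_view :: "(nat \<Rightarrow> nat \<Rightarrow> bool) \<Rightarrow> (nat \<Rightarrow> bool list) \<Rightarrow> nat \<Rightarrow> view" where
  "local_view E cert v = (v, cert v, {(u, cert u) | u. E v u})"

definition all_accept :: "(view \<Rightarrow> bool) \<Rightarrow> nat set \<Rightarrow> (nat \<Rightarrow> nat \<Rightarrow> bool) \<Rightarrow> (nat \<Rightarrow> bool list) \<Rightarrow> bool" where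
  "all_accept A V E cert \<longleftrightarrow> (\<forall>v\<in>V. A (local_view E cert v))"

definition is_pls :: "nat \<Rightarrow> (nat set \<Rightarrow> (nat \<Rightarrow> nat \<Rightarrow> bool) \<Rightarrow> bool) \<Rightarrow> (view \<Rightarrow> bool) \<Rightarrow> bool" where
  "is_pls c C A \<longleftrightarrow>
     (\<forall>V E. admissible c V E \<and> C V E \<longrightarrow> (\<exists>cert. all_accept A V E cert)) \<and>
     (\<forall>V E. admissible c V E \<and> \<not> C V E \<longrightarrow> (\<forall>cert. \<not> all_accept A V E cert))"

definition local_complexity :: "nat \<Rightarrow> (nat set \<Rightarrow> (nat \<Rightarrow> nat \<Rightarrow> bool) \<Rightarrow> bool) \<Rightarrow> nat \<Rightarrow> nat" where
  "local_complexity c C n = (LEAST k. \<exists>A. is_pls c C A \<and>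
     (\<forall>V E. admissible c V E \<and> C V E \<and> card V = n \<longrightarrow>
        (\<exists>cert. all_accept A V E cert \<and> (\<forall>v\<in>V. length (cert v) \<le> k))))"

end

theory Submission
  imports Defs "HOL-Library.FuncSet"
begin

section \<open>Encoding\<close>

fun bin :: "nat \<Rightarrow> bool list" where
  "bin n = (if n = 0 then [] else odd n # bin (n div 2))"

declare bin.simps[simp del]

lemma bin_inj: "bin n = bin m \<Longrightarrow> n = m"
proof (induction n arbitrary: m rule: bin.induct)
  case (1 n)
  show ?case
  proof (cases "n = 0")
    case True
    then show ?thesis using 1(2) by (simp add: bin.simps split: if_splits)
  next
    case False
    then have m0: "m \<noteq> 0" using 1(2) by (auto simp: bin.simps split: if_splits)
    have "odd n = odd m" "bin (n div 2) = bin (m div 2)" using 1(2) False m0 by (auto simp: bin.simps)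
    then have "n div 2 = m div 2" using 1(1) False by blast
    then show ?thesis using \<open>odd n = odd m\<close>
      by (metis div_mult_mod_eq odd_iff_mod_2_eq_one parity_cases)
  qed
qed

lemma bin_len: "n < 2 ^ k \<Longrightarrow> length (bin n) \<le> k"
proof (induction k arbitrary: n)
  case 0
  then show ?case by (simp add: bin.simps)
next
  case (Suc k)
  show ?case
  proof (cases "n = 0")
    case True then show ?thesis by (simp add: bin.simps)
  next
    case False
    have "n div 2 < 2 ^ k" using Suc(2) by auto
    then show ?thesis using Suc(1) False by (simp add: bin.simps)
  qed
qed

fun delim :: "bool list \<Rightarrow> bool list" where
  "delim [] = [False]"
| "delim (b # bs) = True # b # delim bs"

lemma delim_inj: "delim xs @ ys = delim xs' @ ys' \<Longrightarrow> xs = xs' \<and> ys = ys'"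
proof (induction xs arbitrary: xs')
  case Nil
  then show ?case by (cases xs') auto
next
  case (Cons a xs)
  then show ?case by (cases xs') auto
qed

lemma delim_len: "length (delim xs) = 2 * length xs + 1"
  by (induction xs) auto

definition pairbits :: "(bool \<times> bool) list \<Rightarrow> bool list" where
  "pairbits W = concat (map (\<lambda>(a, b). [a, b]) W)"

lemma pairbits_len: "length (pairbits W) = 2 * length W"
  unfolding pairbits_def by (induction W) auto

lemma pairbits_inj: "pairbits W = pairbits W' \<Longrightarrow> W = W'"
proof (induction W arbitrary: W')
  case Nil
  then show ?case by (cases W') (auto simp: pairbits_def)
next
  case (Cons a W)
  then show ?case by (cases W') (auto simp: pairbits_def split: prod.splits)
qed

definition enc :: "(bool \<times> bool) list \<Rightarrow> nat \<Rightarrow> nat \<Rightarrow> bool list" where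
  "enc W r j = delim (pairbits W) @ delim (bin r) @ delim (bin j)"

lemma enc_inj: "enc W r j = enc W' r' j' \<Longrightarrow> W = W' \<and> r = r' \<and> j = j'"
  unfolding enc_def
  by (metis append_Nil2 bin_inj delim_inj pairbits_inj)

lemma enc_len: "length (enc W r j) = 4 * length W + 2 * length (bin r) + 2 * length (bin j) + 3"
  by (simp add: enc_def delim_len pairbits_len)

section \<open>Walk geometry\<close>

definition vsub :: "int \<times> int \<Rightarrow> int \<times> int \<Rightarrow> int \<times> int" where
  "vsub p q = (fst p - fst q, snd p - snd q)"

definition dirv :: "bool \<times> bool \<Rightarrow> int \<times> int" where
  "dirv d = (if fst d then (if snd d then (0, -1) else (0, 1)) else (if snd d then (-1, 0) else (1, 0)))"

definition codev :: "int \<times> int \<Rightarrow> bool \<times> bool" where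
  "codev d = (fst d = 0, if fst d = 0 then snd d = -1 else fst d = -1)"

lemma dirv_codev: "\<bar>fst d\<bar> + \<bar>snd d\<bar> = 1 \<Longrightarrow> dirv (codev d) = d"
  by (cases d) (auto simp: dirv_def codev_def abs_if split: if_splits)

fun WP :: "(bool \<times> bool) list \<Rightarrow> nat \<Rightarrow> int \<times> int" where
  "WP W 0 = (0, 0)"
| "WP W (Suc i) = (fst (WP W i) + fst (dirv (W ! i)), snd (WP W i) + snd (dirv (W ! i)))"

lemma grid_adj_vsub: "grid_adj (vsub a c) (vsub b c) = grid_adj a b"
  by (simp add: grid_adj_def vsub_def)

lemma vsub_eq: "vsub a c = vsub b c \<longleftrightarrow> a = b"
  by (cases a, cases b) (auto simp: vsub_def)

lemma vsub_zero: "vsub a c = (0, 0) \<longleftrightarrow> a = c"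
  by (cases a, cases c) (auto simp: vsub_def)

section \<open>The verifier\<close>

definition okv :: "bool \<Rightarrow> (nat \<times> bool list) set \<Rightarrow> nat \<Rightarrow> bool list \<Rightarrow>
    (bool \<times> bool) list \<Rightarrow> nat \<Rightarrow> nat \<Rightarrow> bool" where
  "okv ind N v cv W r j \<longleftrightarrow> cv = enc W r j \<and> j \<le> length W \<and>
    (\<forall>(u, cu)\<in>N. \<exists>j'. cu = enc W r j' \<and> j' \<le> length W \<and> grid_adj (WP W j) (WP W j')) \<and>
    (\<forall>(u, cu)\<in>N. \<forall>(u', cu')\<in>N. \<forall>j1 j2. cu = enc W r j1 \<longrightarrow> cu' = enc W r j2 \<longrightarrow>
        WP W j1 = WP W j2 \<longrightarrow> u = u') \<and>
    (\<forall>i<length W. WP W (Suc i) = WP W j \<longrightarrow> (\<exists>(u, cu)\<in>N. \<exists>j'. cu = enc W r j' \<and> WP W j' = WP W i)) \<and>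
    (WP W j = (0, 0) \<longrightarrow> v = r) \<and>
    (ind \<longrightarrow> (\<forall>i\<le>length W. grid_adj (WP W j) (WP W i) \<longrightarrow>
        (\<exists>(u, cu)\<in>N. \<exists>j'. cu = enc W r j' \<and> WP W j' = WP W i)))"

definition acc :: "bool \<Rightarrow> view \<Rightarrow> bool" where
  "acc ind vw = (case vw of (v, cv, N) \<Rightarrow> \<exists>W r j. okv ind N v cv W r j)"

lemma okv_nb: "okv ind N v cv W r j \<Longrightarrow> (u, cu) \<in> N \<Longrightarrow>
   \<exists>j'. cu = enc W r j' \<and> j' \<le> length W \<and> grid_adj (WP W j) (WP W j')"
  unfolding okv_def by blast

lemma okv_uniq: "okv ind N v cv W r j \<Longrightarrow> (u, cu) \<in> N \<Longrightarrow> (u', cu') \<in> N \<Longrightarrow>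
   cu = enc W r j1 \<Longrightarrow> cu' = enc W r j2 \<Longrightarrow> WP W j1 = WP W j2 \<Longrightarrow> u = u'"
  unfolding okv_def by blast

lemma okv_back: "okv ind N v cv W r j \<Longrightarrow> i < length W \<Longrightarrow> WP W (Suc i) = WP W j \<Longrightarrow>
   \<exists>u cu j'. (u, cu) \<in> N \<and> cu = enc W r j' \<and> WP W j' = WP W i"
  unfolding okv_def by blast

lemma okv_root: "okv ind N v cv W r j \<Longrightarrow> WP W j = (0, 0) \<Longrightarrow> v = r"
  unfolding okv_def by blast

lemma okv_ind: "okv ind N v cv W r j \<Longrightarrow> ind \<Longrightarrow> i \<le> length W \<Longrightarrow> grid_adj (WP W j) (WP W i) \<Longrightarrow>
   \<exists>u cu j'. (u, cu) \<in> N \<and> cu = enc W r j' \<and> WP W j' = WP W i"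
  unfolding okv_def by blast

section \<open>Soundness\<close>

lemma soundness:
  assumes adm: "admissible c V E" and acc: "all_accept (acc ind) V E cert"
  shows "grid_subgraph V E \<and> (ind \<longrightarrow> grid_induced_subgraph V E)"
proof -
  have sg: "simple_graph V E" and con: "connected_graph V E"
    using adm by (auto simp: admissible_def)
  have EV: "\<And>u v. E u v \<Longrightarrow> u \<in> V \<and> v \<in> V" and Esym: "\<And>u v. E u v \<Longrightarrow> E v u"
    and Vne: "V \<noteq> {}"
    using sg by (auto simp: simple_graph_def)
  define N where "N v = {(u, cert u) | u. E v u}" for v
  have "\<forall>v\<in>V. \<exists>t. okv ind (N v) v (cert v) (fst t) (fst (snd t)) (snd (snd t))"
    using acc by (auto simp: all_accept_def acc_def local_view_def N_def)
  then obtain F where F: "\<And>v. v \<in> V \<Longrightarrow> okv ind (N v) v (cert v) (fst (F v)) (fst (snd (F v))) (snd (snd (F v)))"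
    by metis
  define Wf where "Wf v = fst (F v)" for v
  define rf where "rf v = fst (snd (F v))" for v
  define jf where "jf v = snd (snd (F v))" for v
  have ok: "\<And>v. v \<in> V \<Longrightarrow> okv ind (N v) v (cert v) (Wf v) (rf v) (jf v)"
    using F by (simp add: Wf_def rf_def jf_def)
  have certv: "\<And>v. v \<in> V \<Longrightarrow> cert v = enc (Wf v) (rf v) (jf v)"
    using ok by (simp add: okv_def)
  have inN: "\<And>v u. E v u \<Longrightarrow> (u, cert u) \<in> N v" by (auto simp: N_def)
  have nbr: "\<And>v u. E v u \<Longrightarrow> Wf u = Wf v \<and> rf u = rf v \<and> grid_adj (WP (Wf v) (jf v)) (WP (Wf v) (jf u))"
  proof -
    fix v u assume e: "E v u"
    then have v: "v \<in> V" and u: "u \<in> V" using EV by auto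
    from okv_nb[OF ok[OF v] inN[OF e]] obtain j' where j': "cert u = enc (Wf v) (rf v) j'"
      "grid_adj (WP (Wf v) (jf v)) (WP (Wf v) j')"
      by blast
    then have "Wf u = Wf v \<and> rf u = rf v \<and> jf u = j'" using certv[OF u] enc_inj by metis
    then show "Wf u = Wf v \<and> rf u = rf v \<and> grid_adj (WP (Wf v) (jf v)) (WP (Wf v) (jf u))"
      using j' by simp
  qed
  obtain v0 where v0: "v0 \<in> V" using Vne by blast
  define W where "W = Wf v0"
  define r where "r = rf v0"
  have const: "\<And>v. v \<in> V \<Longrightarrow> Wf v = W \<and> rf v = r"
  proof -
    fix v assume v: "v \<in> V"
    have "(v0, v) \<in> {(x, y). E x y}\<^sup>*" using con v0 v by (auto simp: connected_graph_def)
    then show "Wf v = W \<and> rf v = r"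
    proof (induction rule: rtrancl_induct)
      case base then show ?case by (simp add: W_def r_def)
    next
      case (step y z)
      then show ?case using nbr[of y z] by auto
    qed
  qed
  define pos where "pos v = WP W (jf v)" for v
  have okW: "\<And>v. v \<in> V \<Longrightarrow> okv ind (N v) v (cert v) W r (jf v)"
    using ok const by metis
  have certW: "\<And>v. v \<in> V \<Longrightarrow> cert v = enc W r (jf v)"
    using certv const by metis
  have jle: "\<And>v. v \<in> V \<Longrightarrow> jf v \<le> length W" using okW by (simp add: okv_def)
  have adj: "\<And>u v. E u v \<Longrightarrow> grid_adj (pos u) (pos v)"
    using nbr const EV unfolding pos_def by metis
  have uniq_nbr: "\<And>u v v'. u \<in> V \<Longrightarrow> E u v \<Longrightarrow> E u v' \<Longrightarrow> pos v = pos v' \<Longrightarrow> v = v'"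
  proof -
    fix u v v' assume u: "u \<in> V" and e: "E u v" "E u v'" and p: "pos v = pos v'"
    have "v \<in> V" "v' \<in> V" using e EV by auto
    then have c: "cert v = enc W r (jf v)" "cert v' = enc W r (jf v')" using certW by auto
    have "(v, cert v) \<in> N u" "(v', cert v') \<in> N u" using e inN by auto
    then show "v = v'" using okv_uniq[OF okW[OF u] _ _ c] p unfolding pos_def by blast
  qed
  have U: "\<And>i. i \<le> length W \<Longrightarrow> \<forall>v\<in>V. \<forall>v'\<in>V. pos v = WP W i \<longrightarrow> pos v' = WP W i \<longrightarrow> v = v'"
  proof -
    fix i show "i \<le> length W \<Longrightarrow> \<forall>v\<in>V. \<forall>v'\<in>V. pos v = WP W i \<longrightarrow> pos v' = WP W i \<longrightarrow> v = v'"
    proof (induction i)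
      case 0
      show ?case
      proof (intro ballI impI)
        fix v v' assume "v \<in> V" "v' \<in> V" "pos v = WP W 0" "pos v' = WP W 0"
        then show "v = v'" using okW okv_root unfolding pos_def by (metis WP.simps(1))
      qed
    next
      case (Suc i)
      have il: "i < length W" using Suc(2) by simp
      have down: "\<And>v. v \<in> V \<Longrightarrow> pos v = WP W (Suc i) \<Longrightarrow> \<exists>u. E v u \<and> u \<in> V \<and> pos u = WP W i"
      proof -
        fix v assume v: "v \<in> V" and p: "pos v = WP W (Suc i)"
        from okv_back[OF okW[OF v] il] p obtain u cu j' where "(u, cu) \<in> N v" "cu = enc W r j'" "WP W j' = WP W i"
          unfolding pos_def by metis
        then have e: "E v u" and cu: "cu = cert u" and "WP W j' = WP W i" by (auto simp: N_def)
        then have uV: "u \<in> V" using EV by auto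
        then have "j' = jf u" using certW cu \<open>cu = enc W r j'\<close> enc_inj by metis
        then show "\<exists>u. E v u \<and> u \<in> V \<and> pos u = WP W i"
          using e uV \<open>WP W j' = WP W i\<close> by (auto simp: pos_def)
      qed
      show ?case
      proof (intro ballI impI)
        fix v v' assume v: "v \<in> V" and v': "v' \<in> V" and p: "pos v = WP W (Suc i)" and p': "pos v' = WP W (Suc i)"
        obtain u where u: "E v u" "u \<in> V" "pos u = WP W i" using down[OF v p] by blast
        obtain u' where u': "E v' u'" "u' \<in> V" "pos u' = WP W i" using down[OF v' p'] by blast
        have "u = u'" using Suc.IH il u u' by auto
        then show "v = v'" using uniq_nbr[of u v v'] u u' Esym p p' by auto
      qed
    qed
  qed
  have inj: "inj_on pos V"
  proof (rule inj_onI)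
    fix v v' assume "v \<in> V" "v' \<in> V" "pos v = pos v'"
    then show "v = v'" using U[OF jle[of v]] by (auto simp: pos_def)
  qed
  have gs: "grid_subgraph V E"
    unfolding grid_subgraph_def using inj adj by blast
  have gi: "ind \<Longrightarrow> grid_induced_subgraph V E"
  proof -
    assume ind
    have "\<forall>u\<in>V. \<forall>v\<in>V. E u v \<longleftrightarrow> grid_adj (pos u) (pos v)"
    proof (intro ballI iffI)
      fix u v assume "u \<in> V" "v \<in> V" "E u v" then show "grid_adj (pos u) (pos v)" using adj by auto
    next
      fix u v assume u: "u \<in> V" and v: "v \<in> V" and g: "grid_adj (pos u) (pos v)"
      from okv_ind[OF okW[OF u] \<open>ind\<close> jle[OF v]] g obtain w cw j' where
        "(w, cw) \<in> N u" "cw = enc W r j'" "WP W j' = WP W (jf v)"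
        unfolding pos_def by metis
      then have e: "E u w" and "cw = cert w" by (auto simp: N_def)
      then have wV: "w \<in> V" using EV by auto
      then have "j' = jf w" using certW \<open>cw = cert w\<close> \<open>cw = enc W r j'\<close> enc_inj by metis
      then have "pos w = pos v" using \<open>WP W j' = WP W (jf v)\<close> by (simp add: pos_def)
      then have "w = v" using inj wV v by (auto dest: inj_onD)
      then show "E u v" using e by simp
    qed
    then show "grid_induced_subgraph V E" unfolding grid_induced_subgraph_def using inj by blast
  qed
  show ?thesis using gs gi by blast
qed

inductive iwalk :: "(nat \<Rightarrow> nat \<Rightarrow> bool) \<Rightarrow> nat list \<Rightarrow> bool" for E where
  one: "iwalk E [v]"
| cons: "iwalk E (w # ws) \<Longrightarrow> E v w \<Longrightarrow> iwalk E (v # w # ws)"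

lemma iwalk_nth: "iwalk E ws \<Longrightarrow> Suc i < length ws \<Longrightarrow> E (ws ! i) (ws ! Suc i)"
proof (induction ws arbitrary: i rule: iwalk.induct)
  case (one v) then show ?case by simp
next
  case (cons w ws v) then show ?case by (cases i) auto
qed

lemma iwalk_ne: "iwalk E ws \<Longrightarrow> ws \<noteq> []"
  by (induction rule: iwalk.induct) auto

fun spl :: "nat \<Rightarrow> nat \<Rightarrow> nat list \<Rightarrow> nat list" where
  "spl x y [] = []"
| "spl x y (a # as) = (if a = x then a # y # a # as else a # spl x y as)"

lemma spl_hd: "spl x y (a # as) = a # tl (spl x y (a # as))"
  by simp

lemma spl_props: "x \<in> set ws \<Longrightarrow> set (spl x y ws) = insert y (set ws) \<and> length (spl x y ws) = length ws + 2"
  by (induction ws) auto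

lemma iwalk_spl: "iwalk E ws \<Longrightarrow> x \<in> set ws \<Longrightarrow> E x y \<Longrightarrow> E y x \<Longrightarrow> iwalk E (spl x y ws)"
proof (induction ws rule: iwalk.induct)
  case (one v)
  then show ?case by (auto intro!: iwalk.intros)
next
  case (cons w ws v)
  show ?case
  proof (cases "v = x")
    case True
    then show ?thesis using cons by (auto intro!: iwalk.intros)
  next
    case False
    then have "x \<in> set (w # ws)" using cons by auto
    then have iw: "iwalk E (spl x y (w # ws))" using cons by auto
    have "spl x y (w # ws) = w # tl (spl x y (w # ws))" by (rule spl_hd)
    then show ?thesis using False iw cons(2) iwalk.cons by (metis spl.simps(2))
  qed
qed

lemma boundary:
  assumes "(a, b) \<in> {(x, y). E x y}\<^sup>*" "a \<in> X" "b \<notin> X"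
  shows "\<exists>x y. x \<in> X \<and> y \<notin> X \<and> E x y"
  using assms
proof (induction rule: rtrancl_induct)
  case base then show ?case by simp
next
  case (step y z)
  then show ?case by (cases "y \<in> X") auto
qed

lemma walk_exists:
  assumes sg: "simple_graph V E" and con: "connected_graph V E" and v0: "v0 \<in> V"
  shows "\<exists>ws. iwalk E ws \<and> hd ws = v0 \<and> set ws = V \<and> length ws + 1 \<le> 2 * card V"
proof -
  have fin: "finite V" and EV: "\<And>u v. E u v \<Longrightarrow> u \<in> V \<and> v \<in> V" and Esym: "\<And>u v. E u v \<Longrightarrow> E v u"
    using sg by (auto simp: simple_graph_def)
  have claim: "\<And>t. t \<le> card V \<Longrightarrow> \<exists>ws. iwalk E ws \<and> hd ws = v0 \<and> set ws \<subseteq> V \<and> t \<le> card (set ws)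
      \<and> length ws + 1 \<le> 2 * card (set ws)"
  proof -
    fix t show "t \<le> card V \<Longrightarrow> \<exists>ws. iwalk E ws \<and> hd ws = v0 \<and> set ws \<subseteq> V \<and> t \<le> card (set ws)
      \<and> length ws + 1 \<le> 2 * card (set ws)"
    proof (induction t)
      case 0
      show ?case by (rule exI[of _ "[v0]"]) (auto intro: iwalk.intros v0)
    next
      case (Suc t)
      then obtain ws where ws: "iwalk E ws" "hd ws = v0" "set ws \<subseteq> V" "t \<le> card (set ws)"
        "length ws + 1 \<le> 2 * card (set ws)" by auto
      show ?case
      proof (cases "Suc t \<le> card (set ws)")
        case True then show ?thesis using ws by blast
      next
        case False
        then have ct: "card (set ws) = t" using ws by simp
        then have "set ws \<noteq> V" using Suc(2) by auto
        then obtain b where b: "b \<in> V" "b \<notin> set ws" using ws by auto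
        have v0s: "v0 \<in> set ws" using ws iwalk_ne by (metis hd_in_set)
        have "(v0, b) \<in> {(x, y). E x y}\<^sup>*" using con v0 b by (auto simp: connected_graph_def)
        then obtain x y where xy: "x \<in> set ws" "y \<notin> set ws" "E x y" using boundary v0s b by metis
        let ?ws = "spl x y ws"
        have p: "set ?ws = insert y (set ws)" "length ?ws = length ws + 2" using spl_props xy by auto
        have w: "iwalk E ?ws" using iwalk_spl ws xy Esym by auto
        have h: "hd ?ws = v0" using ws iwalk_ne
          by (metis list.collapse list.sel(1) spl_hd)
        have c: "card (set ?ws) = Suc (card (set ws))" using p xy by simp
        show ?thesis
          apply (rule exI[of _ ?ws])
          using w h p c ws xy EV by auto
      qed
    qed
  qed
  obtain ws where ws: "iwalk E ws" "hd ws = v0" "set ws \<subseteq> V" "card V \<le> card (set ws)"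
    "length ws + 1 \<le> 2 * card (set ws)" using claim by blast
  have "set ws = V" using ws fin by (meson card_seteq)
  then show ?thesis using ws by auto
qed

lemma P_walk:
  assumes "i \<le> length W" and "\<And>i. i < length W \<Longrightarrow> W ! i = codev (vsub (g (Suc i)) (g i))"
    and "\<And>i. i < length W \<Longrightarrow> grid_adj (g i) (g (Suc i))"
  shows "WP W i = vsub (g i) (g 0)"
  using assms(1)
proof (induction i)
  case 0 then show ?case by (simp add: vsub_def)
next
  case (Suc i)
  then have il: "i < length W" by simp
  have u: "\<bar>fst (vsub (g (Suc i)) (g i))\<bar> + \<bar>snd (vsub (g (Suc i)) (g i))\<bar> = 1"
    using assms(3)[OF il] by (simp add: grid_adj_def vsub_def abs_minus_commute)
  have "dirv (W ! i) = vsub (g (Suc i)) (g i)" using assms(2)[OF il] dirv_codev[OF u] by simp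
  then show ?case using Suc by (simp add: vsub_def)
qed

lemma completeness:
  assumes adm: "admissible c V E"
    and inj: "inj_on f V" and adj: "\<And>u v. u \<in> V \<Longrightarrow> v \<in> V \<Longrightarrow> E u v \<Longrightarrow> grid_adj (f u) (f v)"
    and indc: "ind \<Longrightarrow> (\<And>u v. u \<in> V \<Longrightarrow> v \<in> V \<Longrightarrow> grid_adj (f u) (f v) \<Longrightarrow> E u v)"
    and c1: "c \<ge> 1"
  shows "\<exists>cert. all_accept (acc ind) V E cert \<and> (\<forall>v\<in>V. length (cert v) \<le> (12 + 2 * c) * card V)"
proof -
  have sg: "simple_graph V E" and con: "connected_graph V E" and ids: "V \<subseteq> {1..card V ^ c}"
    using adm by (auto simp: admissible_def)
  have fin: "finite V" and EV: "\<And>u v. E u v \<Longrightarrow> u \<in> V \<and> v \<in> V" and Esym: "\<And>u v. E u v \<Longrightarrow> E v u"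
    and Vne: "V \<noteq> {}"
    using sg by (auto simp: simple_graph_def)
  obtain v0 where v0: "v0 \<in> V" using Vne by blast
  obtain ws where ws: "iwalk E ws" "hd ws = v0" "set ws = V" "length ws + 1 \<le> 2 * card V"
    using walk_exists[OF sg con v0] by blast
  have ne: "ws \<noteq> []" using iwalk_ne ws by auto
  have ws0: "ws ! 0 = v0" using ws ne by (simp add: hd_conv_nth)
  define g where "g i = f (ws ! i)" for i
  define W where "W = map (\<lambda>i. codev (vsub (g (Suc i)) (g i))) [0..<length ws - 1]"
  have lW: "length W = length ws - 1" by (simp add: W_def)
  have wsV: "\<And>i. i < length ws \<Longrightarrow> ws ! i \<in> V" using ws by auto
  have step: "\<And>i. i < length W \<Longrightarrow> E (ws ! i) (ws ! Suc i)"
    using iwalk_nth[OF ws(1)] lW by auto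
  have PW: "\<And>i. i \<le> length W \<Longrightarrow> WP W i = vsub (f (ws ! i)) (f v0)"
  proof -
    fix i assume "i \<le> length W"
    then have "WP W i = vsub (g i) (g 0)"
    proof (rule P_walk)
      fix i assume il: "i < length W"
      show "W ! i = codev (vsub (g (Suc i)) (g i))" using il by (simp add: W_def lW)
      show "grid_adj (g i) (g (Suc i))" unfolding g_def using adj step[OF il] wsV il lW by auto
    qed
    then show "WP W i = vsub (f (ws ! i)) (f v0)" by (simp add: g_def ws0)
  qed
  define idx where "idx v = (SOME i. i < length ws \<and> ws ! i = v)" for v
  have idx: "\<And>v. v \<in> V \<Longrightarrow> idx v < length ws \<and> ws ! idx v = v"
  proof -
    fix v assume "v \<in> V"
    then have "v \<in> set ws" using ws by simp
    then have "\<exists>i. i < length ws \<and> ws ! i = v" by (simp add: in_set_conv_nth)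
    then show "idx v < length ws \<and> ws ! idx v = v" unfolding idx_def by (rule someI_ex)
  qed
  have idxle: "\<And>v. v \<in> V \<Longrightarrow> idx v \<le> length W" using idx lW by fastforce
  have Pidx: "\<And>v. v \<in> V \<Longrightarrow> WP W (idx v) = vsub (f v) (f v0)" using idx idxle PW by metis
  define cert where "cert v = enc W v0 (idx v)" for v
  define N where "N v = {(u, cert u) | u. E v u}" for v
  have fV: "\<And>u v. u \<in> V \<Longrightarrow> v \<in> V \<Longrightarrow> f u = f v \<Longrightarrow> u = v" using inj by (auto dest: inj_onD)
  have decode: "\<And>u j'. u \<in> V \<Longrightarrow> cert u = enc W v0 j' \<Longrightarrow> j' = idx u"
    unfolding cert_def using enc_inj by metis
  have okall: "\<And>v. v \<in> V \<Longrightarrow> okv ind (N v) v (cert v) W v0 (idx v)"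
  proof -
    fix v assume v: "v \<in> V"
    have A1: "\<forall>(u, cu)\<in>N v. \<exists>j'. cu = enc W v0 j' \<and> j' \<le> length W \<and> grid_adj (WP W (idx v)) (WP W j')"
    proof (clarify)
      fix u cu assume "(u, cu) \<in> N v"
      then have e: "E v u" and cu: "cu = cert u" by (auto simp: N_def)
      then have u: "u \<in> V" using EV by auto
      show "\<exists>j'. cu = enc W v0 j' \<and> j' \<le> length W \<and> grid_adj (WP W (idx v)) (WP W j')"
        apply (rule exI[of _ "idx u"])
        using cu u v e adj idxle Pidx grid_adj_vsub by (auto simp: cert_def)
    qed
    have A2': "u = u'" if a: "(u, cu) \<in> N v" "(u', cu') \<in> N v" "cu = enc W v0 j1"
        "cu' = enc W v0 j2" "WP W j1 = WP W j2" for u cu u' cu' j1 j2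
    proof -
      have u: "u \<in> V" "cu = cert u" and u': "u' \<in> V" "cu' = cert u'" using a EV by (auto simp: N_def)
      then have "j1 = idx u" "j2 = idx u'" using decode a by auto
      then have "vsub (f u) (f v0) = vsub (f u') (f v0)" using a Pidx u u' by auto
      then show "u = u'" using fV u u' vsub_eq by metis
    qed
    have A2: "\<forall>(u, cu)\<in>N v. \<forall>(u', cu')\<in>N v. \<forall>j1 j2. cu = enc W v0 j1 \<longrightarrow> cu' = enc W v0 j2 \<longrightarrow>
        WP W j1 = WP W j2 \<longrightarrow> u = u'"
      using A2' by blast
    have A3: "\<forall>i<length W. WP W (Suc i) = WP W (idx v) \<longrightarrow>
        (\<exists>(u, cu)\<in>N v. \<exists>j'. cu = enc W v0 j' \<and> WP W j' = WP W i)"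
    proof (clarify)
      fix i assume il: "i < length W" and pe: "WP W (Suc i) = WP W (idx v)"
      have "vsub (f (ws ! Suc i)) (f v0) = vsub (f v) (f v0)" using pe PW[of "Suc i"] Pidx[OF v] il by simp
      have sl: "Suc i < length ws" using il lW by simp
      then have "f (ws ! Suc i) = f v" using vsub_eq \<open>vsub (f (ws ! Suc i)) (f v0) = vsub (f v) (f v0)\<close> by blast
      then have "ws ! Suc i = v" using fV wsV[OF sl] v by blast
      then have e: "E v (ws ! i)" using step[OF il] Esym by auto
      then have u: "ws ! i \<in> V" using EV by auto
      show "\<exists>(u, cu)\<in>N v. \<exists>j'. cu = enc W v0 j' \<and> WP W j' = WP W i"
        apply (rule bexI[of _ "(ws ! i, cert (ws ! i))"])
        using e u Pidx PW il by (auto simp: N_def cert_def)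
    qed
    have A4: "WP W (idx v) = (0, 0) \<longrightarrow> v = v0"
      using Pidx[OF v] vsub_zero fV v v0 by metis
    have A5: "ind \<longrightarrow> (\<forall>i\<le>length W. grid_adj (WP W (idx v)) (WP W i) \<longrightarrow>
        (\<exists>(u, cu)\<in>N v. \<exists>j'. cu = enc W v0 j' \<and> WP W j' = WP W i))"
    proof (clarify)
      fix i assume ind: ind and il: "i \<le> length W" and ga: "grid_adj (WP W (idx v)) (WP W i)"
      have "i < length ws" using il lW ne by (cases ws) auto
      then have u: "ws ! i \<in> V" using wsV by blast
      have "grid_adj (f v) (f (ws ! i))" using ga Pidx[OF v] PW[OF il] grid_adj_vsub by metis
      then have e: "E v (ws ! i)" using indc[OF ind v u] by simp
      show "\<exists>(u, cu)\<in>N v. \<exists>j'. cu = enc W v0 j' \<and> WP W j' = WP W i"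
        apply (rule bexI[of _ "(ws ! i, cert (ws ! i))"])
        using e u Pidx PW il by (auto simp: N_def cert_def)
    qed
    show "okv ind (N v) v (cert v) W v0 (idx v)"
      unfolding okv_def using A1 A2 A3 A4 A5 idxle[OF v] by (simp add: cert_def)
  qed
  have aa: "all_accept (acc ind) V E cert"
    unfolding all_accept_def acc_def local_view_def using okall by (auto simp: N_def)
  let ?n = "card V"
  have n1: "?n \<ge> 1" using fin Vne by (simp add: Suc_le_eq card_gt_0_iff)
  have len: "\<And>v. v \<in> V \<Longrightarrow> length (cert v) \<le> (12 + 2 * c) * ?n"
  proof -
    fix v assume v: "v \<in> V"
    have "v0 \<le> ?n ^ c" using ids v0 by auto
    also have "?n ^ c < (2 ^ ?n) ^ c" using c1 by (intro power_strict_mono) auto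
    also have "\<dots> = 2 ^ (c * ?n)" by (simp add: power_mult[symmetric] mult.commute)
    finally have b1: "length (bin v0) \<le> c * ?n" by (rule bin_len)
    have "idx v < 2 * ?n" using idx[OF v] ws by simp
    also have "2 * ?n \<le> 2 ^ (2 * ?n)" by (metis less_exp order.strict_implies_order)
    finally have b2: "length (bin (idx v)) \<le> 2 * ?n" by (rule bin_len)
    have "length W + 2 \<le> 2 * ?n" using lW ws ne by simp
    then show "length (cert v) \<le> (12 + 2 * c) * ?n"
      using b1 b2 n1 by (simp add: cert_def enc_len algebra_simps)
  qed
  show ?thesis using aa len by blast
qed

definition unitv :: "int \<times> int \<Rightarrow> bool" where
  "unitv v \<longleftrightarrow> \<bar>fst v\<bar> + \<bar>snd v\<bar> = 1"

definition perp :: "int \<times> int \<Rightarrow> int \<times> int \<Rightarrow> bool" where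
  "perp u v \<longleftrightarrow> fst u * fst v + snd u * snd v = 0"

lemma unit_cases: "unitv v \<Longrightarrow> v = (1, 0) \<or> v = (-1, 0) \<or> v = (0, 1) \<or> v = (0, -1)"
  by (cases v) (auto simp: unitv_def abs_if split: if_splits)

lemma grid_adj_unit: "grid_adj p q \<longleftrightarrow> unitv (fst q - fst p, snd q - snd p)"
  by (auto simp: grid_adj_def unitv_def abs_minus_commute)

lemma grid_adj_cases: "grid_adj p q \<Longrightarrow>
   q = (fst p + 1, snd p) \<or> q = (fst p - 1, snd p) \<or> q = (fst p, snd p + 1) \<or> q = (fst p, snd p - 1)"
  unfolding grid_adj_unit using unit_cases[of "(fst q - fst p, snd q - snd p)"]
  by (cases p, cases q) auto

lemma grid_adj_sym: "grid_adj p q \<Longrightarrow> grid_adj q p"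
  by (auto simp: grid_adj_def abs_minus_commute)

lemma grid_adj_irrefl: "\<not> grid_adj p p"
  by (simp add: grid_adj_def)

lemma sq_lemma:
  assumes "grid_adj P Q" "grid_adj Q R" "grid_adj R S" "grid_adj S P" "P \<noteq> R" "Q \<noteq> S"
  shows "R = (fst Q + fst S - fst P, snd Q + snd S - snd P)"
proof -
  obtain p1 p2 where P: "P = (p1, p2)" by (cases P)
  from grid_adj_cases[OF assms(1)] grid_adj_cases[OF assms(2)] grid_adj_cases[OF grid_adj_sym[OF assms(4)]]
    assms(3,5,6)
  show ?thesis unfolding P by (auto simp: grid_adj_def)
qed

definition lin :: "int \<times> int \<Rightarrow> int \<times> int \<Rightarrow> int \<times> int \<Rightarrow> int \<times> int" where
  "lin U W p = (fst p * fst U + snd p * fst W, fst p * snd U + snd p * snd W)"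

definition aff :: "int \<times> int \<Rightarrow> int \<times> int \<Rightarrow> int \<times> int \<Rightarrow> int \<times> int \<Rightarrow> int \<times> int" where
  "aff z0 U W p = (fst z0 + fst (lin U W p), snd z0 + snd (lin U W p))"

lemma units4:
  assumes "unitv a" "unitv b" "perp a b" "unitv u"
  shows "u = a \<or> u = (- fst a, - snd a) \<or> u = b \<or> u = (- fst b, - snd b)"
  using unit_cases[OF assms(1)] unit_cases[OF assms(2)] unit_cases[OF assms(4)] assms(3)
  by (auto simp: perp_def)

lemma lin_unit:
  assumes "unitv U" "unitv W" "perp U W" "unitv d" "unitv e" "perp d e"
  shows "unitv (lin U W d) \<and> unitv (lin U W e) \<and> perp (lin U W d) (lin U W e)"
  using unit_cases[OF assms(1)] unit_cases[OF assms(2)] unit_cases[OF assms(4)]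
    unit_cases[OF assms(5)] assms(3,6)
  by (auto simp: perp_def lin_def unitv_def)

lemma rule2:
  fixes ps :: "'a \<Rightarrow> int \<times> int" and g :: "'a \<Rightarrow> int \<times> int"
  assumes inj: "inj_on g S"
    and adjg: "\<And>s t. s \<in> S \<Longrightarrow> t \<in> S \<Longrightarrow> Adj s t \<Longrightarrow> grid_adj (g s) (g t)"
    and UW: "unitv U" "unitv W" "perp U W"
    and de: "unitv d" "unitv e" "perp d e"
    and mem: "p \<in> S" "q \<in> S" "q' \<in> S" "r \<in> S" "r' \<in> S"
    and gp: "g p = aff z0 U W (ps p)" and gq: "g q = aff z0 U W (ps q)" and gq': "g q' = aff z0 U W (ps q')"
    and pq: "ps q = (fst (ps p) + fst d, snd (ps p) + snd d)"
    and pq': "ps q' = (fst (ps q) + fst e, snd (ps q) + snd e)"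
    and pr: "ps r = (fst (ps q) + fst d, snd (ps q) + snd d)"
    and pr': "ps r' = (fst (ps q') + fst d, snd (ps q') + snd d)"
    and e1: "Adj q r" and e2: "Adj r r'" and e3: "Adj r' q'" and e4: "Adj q' q"
  shows "g r = aff z0 U W (ps r) \<and> g r' = aff z0 U W (ps r')"
proof -
  define Ad where "Ad = lin U W d"
  define Ae where "Ae = lin U W e"
  have AU: "unitv Ad" "unitv Ae" "perp Ad Ae" using lin_unit[OF UW de] by (auto simp: Ad_def Ae_def)
  have gqv: "g q = (fst (g p) + fst Ad, snd (g p) + snd Ad)"
    using gp gq pq by (simp add: aff_def lin_def Ad_def algebra_simps)
  have gq'v: "g q' = (fst (g q) + fst Ae, snd (g q) + snd Ae)"
    using gq gq' pq' by (simp add: aff_def lin_def Ae_def algebra_simps)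
  have a1: "grid_adj (g q) (g r)" "grid_adj (g r) (g r')" "grid_adj (g r') (g q')" "grid_adj (g q') (g q)"
    using adjg mem e1 e2 e3 e4 by auto
  have dne: "d \<noteq> (0,0)" "e \<noteq> (0, 0)" "d \<noteq> e" "d \<noteq> (- fst e, - snd e)"
  proof -
    have "perp d e" by (rule de(3))
    then show "d \<noteq> (0,0)" "e \<noteq> (0, 0)" "d \<noteq> e" "d \<noteq> (- fst e, - snd e)"
      using unit_cases[OF de(1)] unit_cases[OF de(2)] unfolding perp_def
      by (elim disjE; simp)+
  qed
  have neq: "\<And>s t. s \<in> S \<Longrightarrow> t \<in> S \<Longrightarrow> ps s \<noteq> ps t \<Longrightarrow> g s \<noteq> g t"
    using inj by (metis inj_onD)
  have n1: "g q \<noteq> g r'"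
    using neq[OF mem(2) mem(5)] pr' pq' dne(4) by (cases d, cases e) (auto simp: prod_eq_iff)
  have n2: "g r \<noteq> g q'"
    using neq[OF mem(4) mem(3)] pr pq' dne(3) by (cases d, cases e) (auto simp: prod_eq_iff)
  have n3: "g r \<noteq> g p"
    using neq[OF mem(4) mem(1)] pr pq dne(1) by (cases d) (auto simp: prod_eq_iff)
  have sq: "g r' = (fst (g r) + fst (g q') - fst (g q), snd (g r) + snd (g q') - snd (g q))"
    using sq_lemma[OF a1 n1 n2] .
  define u where "u = (fst (g r) - fst (g q), snd (g r) - snd (g q))"
  have uu: "unitv u" using a1(1) by (simp add: grid_adj_unit u_def)
  have gr: "g r = (fst (g q) + fst u, snd (g q) + snd u)" by (simp add: u_def)
  have "u = Ad"
    using units4[OF AU uu] gr gqv gq'v n1 n2 n3 sq by (auto simp: prod_eq_iff)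
  then have grv: "g r = aff z0 U W (ps r)"
    using gr gq pr by (simp add: aff_def lin_def Ad_def algebra_simps)
  have "g r' = aff z0 U W (ps r')"
    using sq grv gq gq' pr pr' pq' by (simp add: aff_def lin_def algebra_simps)
  then show ?thesis using grv by simp
qed

datatype slot = FC int int | FL int int | FR int int | BB nat bool bool | BT nat bool bool

definition bi :: "bool \<Rightarrow> int" where "bi b = (if b then 1 else 0)"

fun spos :: "(nat \<Rightarrow> bool) \<Rightarrow> (nat \<Rightarrow> bool) \<Rightarrow> slot \<Rightarrow> int \<times> int" where
  "spos x y (FC a b) = (a, b)"
| "spos x y (FL a b) = (a, b)"
| "spos x y (FR a b) = (a, b)"
| "spos x y (BB i dx dy) = (4 * int i + 4 + bi dx, if x i then 2 + bi dy else -1 - bi dy)"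
| "spos x y (BT i dx dy) = (4 * int i + 4 + bi dx, if y i then 3 + bi dy else 8 - bi dy)"

fun tg :: "slot \<Rightarrow> nat" where
  "tg (FC a b) = 0"
| "tg (FL a b) = 1"
| "tg (BB i dx dy) = 1"
| "tg (FR a b) = 2"
| "tg (BT i dx dy) = 2"

definition sadj :: "(nat \<Rightarrow> bool) \<Rightarrow> (nat \<Rightarrow> bool) \<Rightarrow> slot \<Rightarrow> slot \<Rightarrow> bool" where
  "sadj x y s t \<longleftrightarrow> grid_adj (spos x y s) (spos x y t) \<and> tg s + tg t \<noteq> 3"

definition Lm :: "nat \<Rightarrow> int" where "Lm m = 4 * int m + 1"

fun inS :: "nat \<Rightarrow> nat \<Rightarrow> slot \<Rightarrow> bool" where
  "inS m k (FC a b) = ((a = 0 \<or> a = 1) \<and> 0 \<le> b \<and> b \<le> 6)"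
| "inS m k (FL a b) = ((2 \<le> a \<and> a \<le> Lm m \<and> (b = 0 \<or> b = 1)) \<or> (Lm m < a \<and> a \<le> Lm m + int k \<and> b = 0))"
| "inS m k (FR a b) = (2 \<le> a \<and> a \<le> Lm m \<and> (b = 5 \<or> b = 6))"
| "inS m k (BB i dx dy) = (i < m)"
| "inS m k (BT i dx dy) = (i < m)"

definition Sig :: "nat \<Rightarrow> nat \<Rightarrow> slot set" where "Sig m k = {s. inS m k s}"

lemma spos_x: "tg s \<noteq> 1 \<Longrightarrow> spos x y s = spos x' y s"
  by (cases s) auto

lemma spos_y: "tg s \<noteq> 2 \<Longrightarrow> spos x y s = spos x y' s"
  by (cases s) auto

lemma sadj_sym: "sadj x y s t \<Longrightarrow> sadj x y t s"
  unfolding sadj_def using grid_adj_sym by (auto simp: add.commute)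

lemma sadj_irrefl: "\<not> sadj x y s s"
  unfolding sadj_def using grid_adj_irrefl by auto

lemma bi_cases: "bi b = 0 \<or> bi b = 1" by (simp add: bi_def)

lemma spos_inj:
  assumes yes: "\<forall>i<m. \<not> (x i \<and> y i)" and s: "inS m k s" and t: "inS m k t"
    and eq: "spos x y s = spos x y t"
  shows "s = t"
  using s t eq yes
  apply (cases s; cases t)
  apply (auto simp: bi_def Lm_def split: if_splits)
  apply presburger+
  done

lemma sep_BB_BT:
  assumes "i < m" "\<forall>i<m. \<not> (x i \<and> y i)"
  shows "\<not> grid_adj (spos x y (BB i dx dy)) (spos x y (BT j dx' dy'))"
proof (cases "i = j")
  case True
  then have "\<not> (x i \<and> y i)" using assms by auto
  then show ?thesis using True by (auto simp: grid_adj_def bi_def split: if_splits)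
next
  case False
  then show ?thesis by (auto simp: grid_adj_def bi_def split: if_splits)
qed

lemma far_col: "a \<le> 1 \<Longrightarrow> \<not> grid_adj (a, b) (4 * int i + 4 + bi dx, c)"
  by (auto simp: grid_adj_def bi_def abs_if)

lemma far_col': "a \<le> 1 \<Longrightarrow> \<not> grid_adj (4 * int i + 4 + bi dx, c) (a, b)"
  using far_col grid_adj_sym by blast

lemma tg3: "tg s + tg t = 3 \<Longrightarrow> (tg s = 1 \<and> tg t = 2) \<or> (tg s = 2 \<and> tg t = 1)"
  by (cases s; cases t) auto

lemma sep12:
  assumes yes: "\<forall>i<m. \<not> (x i \<and> y i)" and s: "inS m k s" and t: "inS m k t"
    and ts: "tg s = 1" and tt: "tg t = 2"
  shows "\<not> grid_adj (spos x y s) (spos x y t)"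
proof (cases s)
  case (FL a b)
  then show ?thesis using s t tt
    by (cases t) (auto simp: grid_adj_def bi_def abs_if split: if_splits)
next
  case (BB i dx dy)
  then show ?thesis
  proof (cases t)
    case (FR a b)
    then show ?thesis using BB s t by (auto simp: grid_adj_def bi_def abs_if Lm_def split: if_splits)
  next
    case (BT j dx' dy')
    then show ?thesis using BB s yes sep_BB_BT by auto
  qed (use tt in auto)
qed (use ts in auto)

lemma sep:
  assumes yes: "\<forall>i<m. \<not> (x i \<and> y i)" and s: "inS m k s" and t: "inS m k t"
    and ga: "grid_adj (spos x y s) (spos x y t)"
  shows "tg s + tg t \<noteq> 3"
  using tg3[of s t] sep12[OF yes s t] sep12[OF yes t s] ga grid_adj_sym by blast

lemma C_indep:
  assumes s: "inS m k s" and ts: "tg s = 0" and t: "inS m k t"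
  shows "sadj x y s t = sadj x' y' s t"
proof -
  obtain a b where sa: "s = FC a b" and a: "a \<le> 1" using s ts by (cases s) auto
  show ?thesis
  proof (cases t)
    case (BB i dx dy) then show ?thesis using sa a far_col by (simp add: sadj_def)
  next
    case (BT i dx dy) then show ?thesis using sa a far_col by (simp add: sadj_def)
  qed (auto simp: sadj_def sa)
qed

lemma C_R:
  assumes s: "inS m k s" and ts: "tg s = 0" and t: "inS m k t" and tt: "tg t = 2"
    and ad: "sadj x y s t"
  shows "t = FR 2 5 \<or> t = FR 2 6"
proof -
  obtain a b where sa: "s = FC a b" and a: "a \<le> 1" using s ts by (cases s) auto
  show ?thesis
  proof (cases t)
    case (BT i dx dy) then show ?thesis using sa a far_col ad by (simp add: sadj_def)
  next
    case (FR c d) then show ?thesis using sa s t ad by (auto simp: sadj_def grid_adj_def abs_if split: if_splits)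
  qed (use tt in auto)
qed

lemma Sig_sub: "Sig m k \<subseteq> (\<lambda>(a, b). FC a b) ` ({0..1} \<times> {0..6}) \<union> (\<lambda>(a, b). FL a b) ` ({2..Lm m + int k} \<times> {0..1})
   \<union> (\<lambda>(a, b). FR a b) ` ({2..Lm m} \<times> {5..6}) \<union> (\<lambda>(i, d). BB i (fst d) (snd d)) ` ({..<m} \<times> UNIV)
   \<union> (\<lambda>(i, d). BT i (fst d) (snd d)) ` ({..<m} \<times> UNIV)"
proof
  fix s assume "s \<in> Sig m k"
  then have s: "inS m k s" by (simp add: Sig_def)
  show "s \<in> (\<lambda>(a, b). FC a b) ` ({0..1} \<times> {0..6}) \<union> (\<lambda>(a, b). FL a b) ` ({2..Lm m + int k} \<times> {0..1})
   \<union> (\<lambda>(a, b). FR a b) ` ({2..Lm m} \<times> {5..6}) \<union> (\<lambda>(i, d). BB i (fst d) (snd d)) ` ({..<m} \<times> UNIV)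
   \<union> (\<lambda>(i, d). BT i (fst d) (snd d)) ` ({..<m} \<times> UNIV)"
  proof (cases s)
    case (FC a b) then show ?thesis using s by (auto simp: image_iff)
  next
    case (FL a b) then show ?thesis using s by (auto simp: image_iff Lm_def)
  next
    case (FR a b) then show ?thesis using s by (auto simp: image_iff)
  next
    case (BB i dx dy) then show ?thesis using s by (auto simp: image_iff)
  next
    case (BT i dx dy) then show ?thesis using s by (auto simp: image_iff)
  qed
qed

lemma Sig_finite: "finite (Sig m k)"
  by (rule finite_subset[OF Sig_sub]) auto

lemma card_UNIV_bb: "card (UNIV :: (bool \<times> bool) set) = 4"
proof -
  have e: "(UNIV :: (bool \<times> bool) set) = {(False, False), (False, True), (True, False), (True, True)}" by auto
  have "card (UNIV :: (bool \<times> bool) set) = card {(False, False), (False, True), (True, False), (True, True)}"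
    by (simp only: e)
  then show ?thesis by simp
qed

lemma Sig_card0: "card (Sig m 0) \<le> 24 * m + 14"
proof -
  let ?A1 = "(\<lambda>(a, b). FC a b) ` ({0..1::int} \<times> {0..6::int})"
  let ?A2 = "(\<lambda>(a, b). FL a b) ` ({2..Lm m + int 0} \<times> {0..1::int})"
  let ?A3 = "(\<lambda>(a, b). FR a b) ` ({2..Lm m} \<times> {5..6::int})"
  let ?A4 = "(\<lambda>(i, d). BB i (fst d) (snd d)) ` ({..<m} \<times> (UNIV :: (bool \<times> bool) set))"
  let ?A5 = "(\<lambda>(i, d). BT i (fst d) (snd d)) ` ({..<m} \<times> (UNIV :: (bool \<times> bool) set))"
  have f: "finite ?A1" "finite ?A2" "finite ?A3" "finite ?A4" "finite ?A5" by auto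
  have c1: "card ?A1 \<le> 14"
    using card_image_le[of "{0..1::int} \<times> {0..6::int}" "\<lambda>(a, b). FC a b"] by (simp add: card_cartesian_product)
  have c2: "card ?A2 \<le> 8 * m"
    using card_image_le[of "{2..Lm m + int 0} \<times> {0..1::int}" "\<lambda>(a, b). FL a b"]
    by (simp add: card_cartesian_product Lm_def)
  have c3: "card ?A3 \<le> 8 * m"
    using card_image_le[of "{2..Lm m} \<times> {5..6::int}" "\<lambda>(a, b). FR a b"]
    by (simp add: card_cartesian_product Lm_def)
  have c4: "card ?A4 \<le> 4 * m"
    using card_image_le[of "{..<m} \<times> (UNIV :: (bool \<times> bool) set)" "\<lambda>(i, d). BB i (fst d) (snd d)"]
    by (simp add: card_cartesian_product card_UNIV_bb)
  have c5: "card ?A5 \<le> 4 * m"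
    using card_image_le[of "{..<m} \<times> (UNIV :: (bool \<times> bool) set)" "\<lambda>(i, d). BT i (fst d) (snd d)"]
    by (simp add: card_cartesian_product card_UNIV_bb)
  have "card (Sig m 0) \<le> card (?A1 \<union> ?A2 \<union> ?A3 \<union> ?A4 \<union> ?A5)"
    by (rule card_mono) (use f Sig_sub[of m 0] in auto)
  also have "\<dots> \<le> card ?A1 + card ?A2 + card ?A3 + card ?A4 + card ?A5"
    by (meson card_Un_le le_trans add_le_mono order_refl)
  finally show ?thesis using c1 c2 c3 c4 c5 by linarith
qed

lemma Sig_Suc: "Sig m (Suc k) = insert (FL (Lm m + int k + 1) 0) (Sig m k)"
proof -
  have "inS m (Suc k) s \<longleftrightarrow> s = FL (Lm m + int k + 1) 0 \<or> inS m k s" for s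
    by (cases s) auto
  then show ?thesis by (auto simp: Sig_def)
qed

lemma Sig_card: "card (Sig m k) = card (Sig m 0) + k"
proof (induction k)
  case 0 then show ?case by simp
next
  case (Suc k)
  have "FL (Lm m + int k + 1) 0 \<notin> Sig m k" by (simp add: Sig_def)
  then show ?case using Suc Sig_finite by (simp add: Sig_Suc)
qed

lemma FC00: "FC 0 0 \<in> Sig m k" by (simp add: Sig_def)

definition NS :: "nat \<Rightarrow> nat \<Rightarrow> nat" where "NS m k = card (Sig m k)"
definition hh :: "nat \<Rightarrow> nat \<Rightarrow> nat \<Rightarrow> slot" where
  "hh m k = (SOME h. bij_betw h {1..NS m k} (Sig m k))"
definition GV :: "nat \<Rightarrow> nat \<Rightarrow> nat set" where "GV m k = {1..NS m k}"
definition GE :: "nat \<Rightarrow> nat \<Rightarrow> (nat \<Rightarrow> bool) \<Rightarrow> (nat \<Rightarrow> bool) \<Rightarrow> nat \<Rightarrow> nat \<Rightarrow> bool" where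
  "GE m k x y u v \<longleftrightarrow> u \<in> GV m k \<and> v \<in> GV m k \<and> sadj x y (hh m k u) (hh m k v)"
definition iota :: "nat \<Rightarrow> nat \<Rightarrow> slot \<Rightarrow> nat" where "iota m k = inv_into (GV m k) (hh m k)"

lemma hh_bij: "bij_betw (hh m k) (GV m k) (Sig m k)"
proof -
  have "\<exists>h. bij_betw h {1..NS m k} (Sig m k)"
    unfolding NS_def by (rule ex_bij_betw_nat_finite_1[OF Sig_finite])
  then show ?thesis unfolding hh_def GV_def by (rule someI_ex)
qed

lemma hh_in: "u \<in> GV m k \<Longrightarrow> hh m k u \<in> Sig m k"
  using hh_bij by (auto simp: bij_betw_def)

lemma hh_inS: "u \<in> GV m k \<Longrightarrow> inS m k (hh m k u)"
  using hh_in by (simp add: Sig_def)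

lemma iota_in: "s \<in> Sig m k \<Longrightarrow> iota m k s \<in> GV m k \<and> hh m k (iota m k s) = s"
  using hh_bij unfolding iota_def bij_betw_def
  by (metis f_inv_into_f inv_into_into)

lemma iota_hh: "u \<in> GV m k \<Longrightarrow> iota m k (hh m k u) = u"
  using hh_bij unfolding iota_def bij_betw_def by (simp add: inv_into_f_f)

lemma NS_pos: "NS m k \<ge> 1"
proof -
  have "card (Sig m k) > 0" using FC00 Sig_finite by (metis card_gt_0_iff empty_iff)
  then show ?thesis by (simp add: NS_def)
qed

lemma card_GV: "card (GV m k) = NS m k" by (simp add: GV_def)

section \<open>Connectivity\<close>

definition Rel :: "nat \<Rightarrow> nat \<Rightarrow> (nat \<Rightarrow> bool) \<Rightarrow> (nat \<Rightarrow> bool) \<Rightarrow> (slot \<times> slot) set" where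
  "Rel m k x y = {(s, t). inS m k s \<and> inS m k t \<and> sadj x y s t}"

definition Bs :: "int \<Rightarrow> int \<Rightarrow> slot" where "Bs a b = (if a \<le> 1 then FC a b else FL a b)"
definition Ts :: "int \<Rightarrow> int \<Rightarrow> slot" where "Ts a b = (if a \<le> 1 then FC a b else FR a b)"

lemma Bs_in: "0 \<le> a \<Longrightarrow> a \<le> Lm m \<Longrightarrow> b = 0 \<or> b = 1 \<Longrightarrow> inS m k (Bs a b)"
  by (auto simp: Bs_def)
lemma Bs0_in: "0 \<le> a \<Longrightarrow> a \<le> Lm m + int k \<Longrightarrow> inS m k (Bs a 0)"
  by (auto simp: Bs_def)
lemma Ts_in: "0 \<le> a \<Longrightarrow> a \<le> Lm m \<Longrightarrow> b = 5 \<or> b = 6 \<Longrightarrow> inS m k (Ts a b)"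
  by (auto simp: Ts_def)
lemma Bs_pos [simp]: "spos x y (Bs a b) = (a, b)" by (simp add: Bs_def)
lemma Ts_pos [simp]: "spos x y (Ts a b) = (a, b)" by (simp add: Ts_def)
lemma Bs_tg: "tg (Bs a b) \<le> 1" by (simp add: Bs_def)
lemma Ts_tg: "tg (Ts a b) = 0 \<or> tg (Ts a b) = 2" by (simp add: Ts_def)

lemma stp: "inS m k s \<Longrightarrow> inS m k t \<Longrightarrow> sadj x y s t \<Longrightarrow> (t, z) \<in> (Rel m k x y)\<^sup>* \<Longrightarrow>
   (s, z) \<in> (Rel m k x y)\<^sup>*"
  by (rule converse_rtrancl_into_rtrancl) (auto simp: Rel_def)

lemma reach_all:
  assumes s: "inS m k s"
  shows "(s, FC 0 0) \<in> (Rel m k x y)\<^sup>*"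
proof -
  let ?R = "Rel m k x y"
  have row0: "\<And>t::nat. int t \<le> Lm m + int k \<Longrightarrow> (Bs (int t) 0, FC 0 0) \<in> ?R\<^sup>*"
  proof -
    fix t :: nat show "int t \<le> Lm m + int k \<Longrightarrow> (Bs (int t) 0, FC 0 0) \<in> ?R\<^sup>*"
    proof (induction t)
      case 0 then show ?case by (simp add: Bs_def)
    next
      case (Suc t)
      have a: "inS m k (Bs (int (Suc t)) 0)" "inS m k (Bs (int t) 0)"
        using Suc.prems by (auto intro!: Bs0_in)
      have ad: "sadj x y (Bs (int (Suc t)) 0) (Bs (int t) 0)"
        using Bs_tg[of "int (Suc t)" 0] Bs_tg[of "int t" 0] by (auto simp: sadj_def grid_adj_def)
      have r: "(Bs (int t) 0, FC 0 0) \<in> ?R\<^sup>*" using Suc.IH Suc.prems by simp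
      show ?case by (rule stp[OF a ad r])
    qed
  qed
  have row0': "(Bs a 0, FC 0 0) \<in> ?R\<^sup>*" if "0 \<le> a" "a \<le> Lm m + int k" for a
  proof -
    define t where "t = nat a"
    have "a = int t" using that(1) by (simp add: t_def)
    then show ?thesis using row0[of t] that by simp
  qed
  have wall: "\<And>a t. (a = 0 \<or> a = 1) \<Longrightarrow> int t \<le> 6 \<Longrightarrow> (FC a (int t), FC 0 0) \<in> ?R\<^sup>*"
  proof -
    fix a :: int and t :: nat assume a: "a = 0 \<or> a = 1"
    show "int t \<le> 6 \<Longrightarrow> (FC a (int t), FC 0 0) \<in> ?R\<^sup>*"
    proof (induction t)
      case 0
      have B: "Bs a 0 = FC a 0" using a by (auto simp: Bs_def)
      have "(Bs a 0, FC 0 0) \<in> ?R\<^sup>*" using a by (intro row0') (auto simp: Lm_def)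
      then show ?case using B by simp
    next
      case (Suc t)
      have ad: "sadj x y (FC a (int (Suc t))) (FC a (int t))" by (simp add: sadj_def grid_adj_def)
      have i: "inS m k (FC a (int (Suc t)))" "inS m k (FC a (int t))" using a Suc.prems by auto
      have r: "(FC a (int t), FC 0 0) \<in> ?R\<^sup>*" using Suc.IH Suc.prems by simp
      show ?case by (rule stp[OF i ad r])
    qed
  qed
  have wall': "(FC a b, FC 0 0) \<in> ?R\<^sup>*" if "a = 0 \<or> a = 1" "0 \<le> b" "b \<le> 6" for a b
  proof -
    define t where "t = nat b"
    have "b = int t" using that(2) by (simp add: t_def)
    then show ?thesis using wall[of a t] that by simp
  qed
  have row5: "\<And>t::nat. int t \<le> Lm m \<Longrightarrow> (Ts (int t) 5, FC 0 0) \<in> ?R\<^sup>*"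
  proof -
    fix t :: nat show "int t \<le> Lm m \<Longrightarrow> (Ts (int t) 5, FC 0 0) \<in> ?R\<^sup>*"
    proof (induction t)
      case 0
      have "(FC 0 5, FC 0 0) \<in> ?R\<^sup>*" by (rule wall') auto
      then show ?case by (simp add: Ts_def)
    next
      case (Suc t)
      have a: "inS m k (Ts (int (Suc t)) 5)" "inS m k (Ts (int t) 5)"
        using Suc.prems by (auto intro!: Ts_in)
      have ad: "sadj x y (Ts (int (Suc t)) 5) (Ts (int t) 5)"
        using Ts_tg[of "int (Suc t)" 5] Ts_tg[of "int t" 5] by (auto simp: sadj_def grid_adj_def)
      have r: "(Ts (int t) 5, FC 0 0) \<in> ?R\<^sup>*" using Suc.IH Suc.prems by simp
      show ?case by (rule stp[OF a ad r])
    qed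
  qed
  have row5': "(Ts a 5, FC 0 0) \<in> ?R\<^sup>*" if "0 \<le> a" "a \<le> Lm m" for a
  proof -
    define t where "t = nat a"
    have "a = int t" using that(1) by (simp add: t_def)
    then show ?thesis using row5[of t] that by simp
  qed
  have FLr: "\<And>a b. inS m k (FL a b) \<Longrightarrow> (FL a b, FC 0 0) \<in> ?R\<^sup>*"
  proof -
    fix a b assume i: "inS m k (FL a b)"
    have B: "Bs a 0 = FL a 0" using i by (auto simp: Bs_def Lm_def)
    have r: "(FL a 0, FC 0 0) \<in> ?R\<^sup>*"
    proof -
      have "(Bs a 0, FC 0 0) \<in> ?R\<^sup>*" using i by (intro row0') (auto simp: Lm_def)
      then show ?thesis using B by simp
    qed
    show "(FL a b, FC 0 0) \<in> ?R\<^sup>*"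
    proof (cases "b = 0")
      case True then show ?thesis using r by simp
    next
      case False
      then have b1: "b = 1" "2 \<le> a" "a \<le> Lm m" using i by auto
      have ad: "sadj x y (FL a b) (FL a 0)" using b1 by (simp add: sadj_def grid_adj_def)
      have i0: "inS m k (FL a 0)" using b1 by simp
      show ?thesis by (rule stp[OF i i0 ad r])
    qed
  qed
  have FRr: "\<And>a b. inS m k (FR a b) \<Longrightarrow> (FR a b, FC 0 0) \<in> ?R\<^sup>*"
  proof -
    fix a b assume i: "inS m k (FR a b)"
    have B: "Ts a 5 = FR a 5" using i by (auto simp: Ts_def)
    have r: "(FR a 5, FC 0 0) \<in> ?R\<^sup>*"
    proof -
      have "(Ts a 5, FC 0 0) \<in> ?R\<^sup>*" using i by (intro row5') auto
      then show ?thesis using B by simp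
    qed
    show "(FR a b, FC 0 0) \<in> ?R\<^sup>*"
    proof (cases "b = 5")
      case True then show ?thesis using r by simp
    next
      case False
      then have b1: "b = 6" "2 \<le> a" "a \<le> Lm m" using i by auto
      have ad: "sadj x y (FR a b) (FR a 5)" using b1 by (simp add: sadj_def grid_adj_def)
      have i0: "inS m k (FR a 5)" using b1 by simp
      show ?thesis by (rule stp[OF i i0 ad r])
    qed
  qed
  show ?thesis
  proof (cases s)
    case (FC a b)
    then have "a = 0 \<or> a = 1" "0 \<le> b" "b \<le> 6" using s by auto
    then show ?thesis using FC wall' by blast
  next
    case (FL a b) then show ?thesis using s FLr by blast
  next
    case (FR a b) then show ?thesis using s FRr by blast
  next
    case (BB i dx dy)
    define col where "col = 4 * int i + 4 + bi dx"
    have im: "i < m" using s BB by simp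
    have cr: "2 \<le> col" "col \<le> Lm m" using im by (auto simp: col_def Lm_def bi_def)
    have F: "inS m k (FL col 0)" "inS m k (FL col 1)" using cr by auto
    have r0: "(FL col 0, FC 0 0) \<in> ?R\<^sup>*" "(FL col 1, FC 0 0) \<in> ?R\<^sup>*" using FLr F by blast+
    have iB: "inS m k (BB i dx False)" "inS m k (BB i dx True)" using im by auto
    have b0: "(BB i dx False, FC 0 0) \<in> ?R\<^sup>*"
    proof (cases "x i")
      case True
      have "sadj x y (BB i dx False) (FL col 1)" using True by (simp add: sadj_def grid_adj_def col_def bi_def)
      then show ?thesis by (rule stp[OF iB(1) F(2) _ r0(2)])
    next
      case False
      have "sadj x y (BB i dx False) (FL col 0)" using False by (simp add: sadj_def grid_adj_def col_def bi_def)
      then show ?thesis by (rule stp[OF iB(1) F(1) _ r0(1)])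
    qed
    have "sadj x y (BB i dx True) (BB i dx False)" by (simp add: sadj_def grid_adj_def bi_def)
    then have b1: "(BB i dx True, FC 0 0) \<in> ?R\<^sup>*" by (rule stp[OF iB(2) iB(1) _ b0])
    show ?thesis using BB b0 b1 by (cases dy) auto
  next
    case (BT i dx dy)
    define col where "col = 4 * int i + 4 + bi dx"
    have im: "i < m" using s BT by simp
    have cr: "2 \<le> col" "col \<le> Lm m" using im by (auto simp: col_def Lm_def bi_def)
    have F: "inS m k (FR col 5)" "inS m k (FR col 6)" using cr by auto
    have r0: "(FR col 5, FC 0 0) \<in> ?R\<^sup>*" "(FR col 6, FC 0 0) \<in> ?R\<^sup>*" using FRr F by blast+
    have iB: "inS m k (BT i dx False)" "inS m k (BT i dx True)" using im by auto
    have b1: "(BT i dx True, FC 0 0) \<in> ?R\<^sup>*"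
    proof (cases "y i")
      case True
      have "sadj x y (BT i dx True) (FR col 5)" using True by (simp add: sadj_def grid_adj_def col_def bi_def)
      then show ?thesis by (rule stp[OF iB(2) F(1) _ r0(1)])
    next
      case False
      have "sadj x y (BT i dx True) (FR col 6)" using False by (simp add: sadj_def grid_adj_def col_def bi_def)
      then show ?thesis by (rule stp[OF iB(2) F(2) _ r0(2)])
    qed
    have "sadj x y (BT i dx False) (BT i dx True)" by (simp add: sadj_def grid_adj_def bi_def)
    then have b0: "(BT i dx False, FC 0 0) \<in> ?R\<^sup>*" by (rule stp[OF iB(1) iB(2) _ b1])
    show ?thesis using BT b0 b1 by (cases dy) auto
  qed
qed

lemma Rel_sym: "(Rel m k x y)\<inverse> = Rel m k x y"
  by (auto simp: Rel_def intro: sadj_sym)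

lemma lift:
  assumes "(s, t) \<in> (Rel m k x y)\<^sup>*"
  shows "(iota m k s, iota m k t) \<in> {(a, b). GE m k x y a b}\<^sup>*"
  using assms
proof (induction rule: rtrancl_induct)
  case base then show ?case by simp
next
  case (step t' t)
  then have i: "inS m k t'" "inS m k t" "sadj x y t' t" by (auto simp: Rel_def)
  then have "GE m k x y (iota m k t') (iota m k t)"
    using iota_in[of t' m k] iota_in[of t m k] by (simp add: GE_def Sig_def)
  then have "(iota m k t', iota m k t) \<in> {(a, b). GE m k x y a b}" by simp
  with step.IH show ?case by (rule rtrancl_into_rtrancl)
qed

lemma adm:
  assumes c1: "c \<ge> 1"
  shows "admissible c (GV m k) (GE m k x y)"
proof -
  have sg: "simple_graph (GV m k) (GE m k x y)"
    unfolding simple_graph_def using NS_pos[of m k] sadj_irrefl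
    by (auto simp: GV_def GE_def intro: sadj_sym)
  have con: "connected_graph (GV m k) (GE m k x y)"
    unfolding connected_graph_def
  proof (intro ballI)
    fix u v assume u: "u \<in> GV m k" and v: "v \<in> GV m k"
    have "(hh m k u, FC 0 0) \<in> (Rel m k x y)\<^sup>*" using reach_all hh_inS[OF u] by blast
    moreover have "(FC 0 0, hh m k v) \<in> (Rel m k x y)\<^sup>*"
    proof -
      have "(hh m k v, FC 0 0) \<in> (Rel m k x y)\<^sup>*" using reach_all hh_inS[OF v] by blast
      then have "(FC 0 0, hh m k v) \<in> ((Rel m k x y)\<inverse>)\<^sup>*" by (rule rtrancl_converseI)
      then show ?thesis by (simp only: Rel_sym)
    qed
    ultimately have "(hh m k u, hh m k v) \<in> (Rel m k x y)\<^sup>*" by simp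
    then have "(iota m k (hh m k u), iota m k (hh m k v)) \<in> {(a, b). GE m k x y a b}\<^sup>*"
      using lift by blast
    then show "(u, v) \<in> {(a, b). GE m k x y a b}\<^sup>*" using iota_hh u v by simp
  qed
  have "NS m k \<le> NS m k ^ c" using NS_pos[of m k] c1
    using power_increasing[of 1 c "NS m k"] by simp
  then have ids: "GV m k \<subseteq> {1..card (GV m k) ^ c}" by (auto simp: GV_def)
  show ?thesis using sg con ids by (simp add: admissible_def)
qed

lemma yes_inst:
  assumes yes: "\<forall>i<m. \<not> (x i \<and> y i)"
  shows "grid_induced_subgraph (GV m k) (GE m k x y)"
proof -
  define f where "f u = spos x y (hh m k u)" for u
  have inj: "inj_on f (GV m k)"
  proof (rule inj_onI)
    fix u v assume u: "u \<in> GV m k" and v: "v \<in> GV m k" and e: "f u = f v"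
    then have "hh m k u = hh m k v" using spos_inj[OF yes hh_inS[OF u] hh_inS[OF v]] by (simp add: f_def)
    then have "iota m k (hh m k u) = iota m k (hh m k v)" by (rule arg_cong)
    then show "u = v" unfolding iota_hh[OF u] iota_hh[OF v] .
  qed
  have "\<forall>u\<in>GV m k. \<forall>v\<in>GV m k. GE m k x y u v \<longleftrightarrow> grid_adj (f u) (f v)"
  proof (intro ballI)
    fix u v assume u: "u \<in> GV m k" and v: "v \<in> GV m k"
    show "GE m k x y u v \<longleftrightarrow> grid_adj (f u) (f v)"
      using sep[OF yes hh_inS[OF u] hh_inS[OF v]] u v by (auto simp: GE_def sadj_def f_def)
  qed
  then show ?thesis unfolding grid_induced_subgraph_def using inj by blast
qed

lemma perp_of: "unitv U \<Longrightarrow> unitv W \<Longrightarrow> U \<noteq> W \<Longrightarrow> U \<noteq> (- fst W, - snd W) \<Longrightarrow> perp U W"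
  using unit_cases[of U] unit_cases[of W] by (auto simp: perp_def)

lemma Bs_tg2 [simp]: "tg (Bs a b) + tg (Bs c d) \<noteq> 3"
  using Bs_tg[of a b] Bs_tg[of c d] by linarith

lemma Ts_tg2 [simp]: "tg (Ts a b) + tg (Ts c d) \<noteq> 3"
  using Ts_tg[of a b] Ts_tg[of c d] by auto

lemma no_inst:
  assumes i0: "i0 < m" and xy: "x i0" "y i0"
  shows "\<not> grid_subgraph (GV m k) (GE m k x y)"
proof
  assume "grid_subgraph (GV m k) (GE m k x y)"
  then obtain f where finj: "inj_on f (GV m k)"
    and fadj: "\<forall>u\<in>GV m k. \<forall>v\<in>GV m k. GE m k x y u v \<longrightarrow> grid_adj (f u) (f v)"
    unfolding grid_subgraph_def by blast
  define S where "S = Sig m k"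
  define g where "g s = f (iota m k s)" for s
  define ps where "ps = spos x y"
  have injg: "inj_on g S"
  proof (rule inj_onI)
    fix s t assume s: "s \<in> S" and t: "t \<in> S" and e: "g s = g t"
    have i1: "iota m k s \<in> GV m k" "hh m k (iota m k s) = s" using iota_in s unfolding S_def by blast+
    have i2: "iota m k t \<in> GV m k" "hh m k (iota m k t) = t" using iota_in t unfolding S_def by blast+
    have "f (iota m k s) = f (iota m k t)" using e by (simp add: g_def)
    then have "iota m k s = iota m k t" by (rule inj_onD[OF finj _ i1(1) i2(1)])
    then have "hh m k (iota m k s) = hh m k (iota m k t)" by simp
    then show "s = t" unfolding i1(2) i2(2) .
  qed
  have adjg: "\<And>s t. s \<in> S \<Longrightarrow> t \<in> S \<Longrightarrow> sadj x y s t \<Longrightarrow> grid_adj (g s) (g t)"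
  proof -
    fix s t assume s: "s \<in> S" and t: "t \<in> S" and a: "sadj x y s t"
    have i1: "iota m k s \<in> GV m k" "hh m k (iota m k s) = s" using iota_in s unfolding S_def by blast+
    have i2: "iota m k t \<in> GV m k" "hh m k (iota m k t) = t" using iota_in t unfolding S_def by blast+
    have "GE m k x y (iota m k s) (iota m k t)" using i1 i2 a unfolding GE_def by simp
    then show "grid_adj (g s) (g t)" using fadj i1(1) i2(1) unfolding g_def by blast
  qed
  have mem: "\<And>s. inS m k s \<Longrightarrow> s \<in> S" by (simp add: S_def Sig_def)
  define z0 where "z0 = g (FC 0 0)"
  define U where "U = (fst (g (FC 1 0)) - fst z0, snd (g (FC 1 0)) - snd z0)"
  define W where "W = (fst (g (FC 0 1)) - fst z0, snd (g (FC 0 1)) - snd z0)"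
  have m00: "FC 0 0 \<in> S" "FC 1 0 \<in> S" "FC 0 1 \<in> S" "FC 1 1 \<in> S" by (auto intro!: mem)
  have a1: "grid_adj (g (FC 0 0)) (g (FC 1 0))" "grid_adj (g (FC 1 0)) (g (FC 1 1))"
    "grid_adj (g (FC 1 1)) (g (FC 0 1))" "grid_adj (g (FC 0 1)) (g (FC 0 0))"
  proof -
    have s1: "sadj x y (FC 0 0) (FC 1 0)" "sadj x y (FC 1 0) (FC 1 1)" "sadj x y (FC 1 1) (FC 0 1)"
      "sadj x y (FC 0 1) (FC 0 0)" by (simp_all add: sadj_def grid_adj_def)
    show "grid_adj (g (FC 0 0)) (g (FC 1 0))" by (rule adjg[OF m00(1) m00(2) s1(1)])
    show "grid_adj (g (FC 1 0)) (g (FC 1 1))" by (rule adjg[OF m00(2) m00(4) s1(2)])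
    show "grid_adj (g (FC 1 1)) (g (FC 0 1))" by (rule adjg[OF m00(4) m00(3) s1(3)])
    show "grid_adj (g (FC 0 1)) (g (FC 0 0))" by (rule adjg[OF m00(3) m00(1) s1(4)])
  qed
  have n1: "g (FC 0 0) \<noteq> g (FC 1 1)" "g (FC 1 0) \<noteq> g (FC 0 1)"
  proof -
    show "g (FC 0 0) \<noteq> g (FC 1 1)"
    proof
      assume "g (FC 0 0) = g (FC 1 1)"
      then have "FC 0 0 = FC 1 1" by (rule inj_onD[OF injg _ m00(1) m00(4)])
      then show False by simp
    qed
    show "g (FC 1 0) \<noteq> g (FC 0 1)"
    proof
      assume "g (FC 1 0) = g (FC 0 1)"
      then have "FC 1 0 = FC 0 1" by (rule inj_onD[OF injg _ m00(2) m00(3)])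
      then show False by simp
    qed
  qed
  have sq: "g (FC 1 1) = (fst (g (FC 1 0)) + fst (g (FC 0 1)) - fst (g (FC 0 0)),
                         snd (g (FC 1 0)) + snd (g (FC 0 1)) - snd (g (FC 0 0)))"
    using sq_lemma[OF a1 n1] .
  have uU: "unitv U" using a1(1) by (simp add: grid_adj_unit U_def z0_def)
  have uW: "unitv W" using a1(4) grid_adj_sym by (simp add: grid_adj_unit W_def z0_def)
  have "U \<noteq> W" using n1(2) by (auto simp: U_def W_def prod_eq_iff)
  moreover have "U \<noteq> (- fst W, - snd W)" using n1(1) sq by (auto simp: U_def W_def z0_def prod_eq_iff)
  ultimately have pUW: "perp U W" using perp_of uU uW by blast
  define good where "good s \<longleftrightarrow> g s = aff z0 U W (ps s)" for s
  have g00: "good (FC 0 0)" "good (FC 1 0)" "good (FC 0 1)" "good (FC 1 1)"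
    using sq by (auto simp: good_def aff_def lin_def ps_def U_def W_def z0_def)
  have R2: "good r \<and> good r'" if "p \<in> S" "q \<in> S" "q' \<in> S" "r \<in> S" "r' \<in> S"
      "good p" "good q" "good q'" "unitv d" "unitv e" "perp d e"
      "ps q = (fst (ps p) + fst d, snd (ps p) + snd d)"
      "ps q' = (fst (ps q) + fst e, snd (ps q) + snd e)"
      "ps r = (fst (ps q) + fst d, snd (ps q) + snd d)"
      "ps r' = (fst (ps q') + fst d, snd (ps q') + snd d)"
      "sadj x y q r" "sadj x y r r'" "sadj x y r' q'" "sadj x y q' q" for p q q' r r' d e
    using rule2[OF injg adjg uU uW pUW that(9-11) that(1-5) that(6-8)[unfolded good_def] that(12-19)]
    unfolding good_def .
  have dU: "unitv (0, 1)" "unitv (1, 0)" "perp (0, 1) (1, 0)" "perp (1, 0) (0, 1)" "unitv (0, -1)"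
    "perp (0, -1) (1, 0)"
    by (auto simp: unitv_def perp_def)
  have wall: "\<And>t::nat. t \<le> 5 \<Longrightarrow> good (FC 0 (int t)) \<and> good (FC 1 (int t)) \<and> good (FC 0 (int t + 1)) \<and> good (FC 1 (int t + 1))"
  proof -
    fix t :: nat show "t \<le> 5 \<Longrightarrow> good (FC 0 (int t)) \<and> good (FC 1 (int t)) \<and> good (FC 0 (int t + 1)) \<and> good (FC 1 (int t + 1))"
    proof (induction t)
      case 0 then show ?case using g00 by simp
    next
      case (Suc t)
      then have IH: "good (FC 0 (int t)) \<and> good (FC 1 (int t)) \<and> good (FC 0 (int t + 1)) \<and> good (FC 1 (int t + 1))"
        by simp
      have "good (FC 0 (int t + 2)) \<and> good (FC 1 (int t + 2))"
        apply (rule R2[of "FC 0 (int t)" "FC 0 (int t + 1)" "FC 1 (int t + 1)" "FC 0 (int t + 2)" "FC 1 (int t + 2)" "(0, 1)" "(1, 0)"])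
        using Suc(2) IH dU by (auto intro!: mem simp: ps_def sadj_def grid_adj_def)
      then show ?case using IH by (simp add: add.commute add.left_commute)
    qed
  qed
  have bot: "\<And>t::nat. int t + 1 \<le> Lm m \<Longrightarrow> good (Bs (int t) 0) \<and> good (Bs (int t) 1) \<and> good (Bs (int t + 1) 0) \<and> good (Bs (int t + 1) 1)"
  proof -
    fix t :: nat show "int t + 1 \<le> Lm m \<Longrightarrow> good (Bs (int t) 0) \<and> good (Bs (int t) 1) \<and> good (Bs (int t + 1) 0) \<and> good (Bs (int t + 1) 1)"
    proof (induction t)
      case 0 then show ?case using g00 by (simp add: Bs_def)
    next
      case (Suc t)
      then have IH: "good (Bs (int t) 0) \<and> good (Bs (int t) 1) \<and> good (Bs (int t + 1) 0) \<and> good (Bs (int t + 1) 1)"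
        by simp
      have "good (Bs (int t + 2) 0) \<and> good (Bs (int t + 2) 1)"
        apply (rule R2[of "Bs (int t) 0" "Bs (int t + 1) 0" "Bs (int t + 1) 1" "Bs (int t + 2) 0" "Bs (int t + 2) 1" "(1, 0)" "(0, 1)"])
        using Suc(2) IH dU by (auto intro!: mem Bs_in simp: ps_def sadj_def grid_adj_def)
      then show ?case using IH by (simp add: add.commute add.left_commute)
    qed
  qed
  have top: "\<And>t::nat. int t + 1 \<le> Lm m \<Longrightarrow> good (Ts (int t) 5) \<and> good (Ts (int t) 6) \<and> good (Ts (int t + 1) 5) \<and> good (Ts (int t + 1) 6)"
  proof -
    fix t :: nat show "int t + 1 \<le> Lm m \<Longrightarrow> good (Ts (int t) 5) \<and> good (Ts (int t) 6) \<and> good (Ts (int t + 1) 5) \<and> good (Ts (int t + 1) 6)"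
    proof (induction t)
      case 0 then show ?case using wall[of 5] by (simp add: Ts_def)
    next
      case (Suc t)
      then have IH: "good (Ts (int t) 5) \<and> good (Ts (int t) 6) \<and> good (Ts (int t + 1) 5) \<and> good (Ts (int t + 1) 6)"
        by simp
      have "good (Ts (int t + 2) 5) \<and> good (Ts (int t + 2) 6)"
        apply (rule R2[of "Ts (int t) 5" "Ts (int t + 1) 5" "Ts (int t + 1) 6" "Ts (int t + 2) 5" "Ts (int t + 2) 6" "(1, 0)" "(0, 1)"])
        using Suc(2) IH dU by (auto intro!: mem Ts_in simp: ps_def sadj_def grid_adj_def)
      then show ?case using IH by (simp add: add.commute add.left_commute)
    qed
  qed
  define a0 where "a0 = 4 * int i0 + 4"
  have a0L: "a0 + 1 \<le> Lm m" using i0 by (simp add: a0_def Lm_def)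
  have gb: "good (FL a0 0)" "good (FL a0 1)" "good (FL (a0 + 1) 1)"
    using bot[of "4 * i0 + 4"] a0L by (auto simp: a0_def Bs_def)
  have gt: "good (FR a0 6)" "good (FR a0 5)" "good (FR (a0 + 1) 5)"
    using top[of "4 * i0 + 4"] a0L by (auto simp: a0_def Ts_def)
  have mFL: "inS m k (FL a0 0)" "inS m k (FL a0 1)" "inS m k (FL (a0 + 1) 1)"
    "inS m k (FR a0 5)" "inS m k (FR a0 6)" "inS m k (FR (a0 + 1) 5)"
    using a0L by (auto simp: a0_def)
  have pB: "\<And>dx dy. ps (BB i0 dx dy) = (a0 + bi dx, 2 + bi dy)" using xy by (simp add: ps_def a0_def)
  have pT: "\<And>dx dy. ps (BT i0 dx dy) = (a0 + bi dx, 3 + bi dy)" using xy by (simp add: ps_def a0_def)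
  have b1: "good (BB i0 False False) \<and> good (BB i0 True False)"
    apply (rule R2[of "FL a0 0" "FL a0 1" "FL (a0 + 1) 1" "BB i0 False False" "BB i0 True False" "(0, 1)" "(1, 0)"])
    using mFL gb dU i0 pB by (auto intro!: mem simp: ps_def sadj_def grid_adj_def bi_def)
  have b2: "good (BB i0 False True) \<and> good (BB i0 True True)"
    apply (rule R2[of "FL a0 1" "BB i0 False False" "BB i0 True False" "BB i0 False True" "BB i0 True True" "(0, 1)" "(1, 0)"])
    using mFL gb b1 dU i0 pB by (auto intro!: mem simp: ps_def sadj_def grid_adj_def bi_def)
  have t1: "good (BT i0 False True) \<and> good (BT i0 True True)"
    apply (rule R2[of "FR a0 6" "FR a0 5" "FR (a0 + 1) 5" "BT i0 False True" "BT i0 True True" "(0, -1)" "(1, 0)"])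
    using mFL gt dU i0 pT by (auto intro!: mem simp: ps_def sadj_def grid_adj_def bi_def)
  have t2: "good (BT i0 False False) \<and> good (BT i0 True False)"
    apply (rule R2[of "FR a0 5" "BT i0 False True" "BT i0 True True" "BT i0 False False" "BT i0 True False" "(0, -1)" "(1, 0)"])
    using mFL gt t1 dU i0 pT by (auto intro!: mem simp: ps_def sadj_def grid_adj_def bi_def)
  have "g (BB i0 False True) = g (BT i0 False False)"
    using b2 t2 pB pT by (simp add: good_def bi_def)
  moreover have "BB i0 False True \<in> S" "BT i0 False False \<in> S" using i0 by (auto intro!: mem)
  ultimately have "BB i0 False True = BT i0 False False" using inj_onD[OF injg] by blast
  then show False by simp
qed

lemma tg_cases: "tg s = 0 \<or> tg s = 1 \<or> tg s = 2" by (cases s) auto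

lemma sadj_x2: "tg s = 2 \<Longrightarrow> sadj x y s t = sadj x' y s t"
proof -
  assume ts: "tg s = 2"
  show ?thesis
  proof (cases "tg t = 1")
    case True then show ?thesis using ts by (simp add: sadj_def)
  next
    case False then show ?thesis using ts spos_x[of s x y x'] spos_x[of t x y x'] by (simp add: sadj_def)
  qed
qed

lemma sadj_y1: "tg s = 1 \<Longrightarrow> sadj x y s t = sadj x y' s t"
proof -
  assume ts: "tg s = 1"
  show ?thesis
  proof (cases "tg t = 2")
    case True then show ?thesis using ts by (simp add: sadj_def)
  next
    case False then show ?thesis using ts spos_y[of s x y y'] spos_y[of t x y y'] by (simp add: sadj_def)
  qed
qed

definition Sset :: "nat \<Rightarrow> nat \<Rightarrow> slot set" where
  "Sset m k = {s. inS m k s \<and> tg s = 0} \<union> {FR 2 5, FR 2 6}"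

lemma lv_eq:
  assumes "\<And>w. E1 u w = E2 u w" "\<And>w. E1 u w \<Longrightarrow> c1 w = c2 w" "c1 u = c2 u"
  shows "local_view E1 c1 u = local_view E2 c2 u"
proof -
  have "{(w, c1 w) |w. E1 u w} = {(w, c2 w) |w. E2 u w}" using assms(1,2) by auto
  then show ?thesis unfolding local_view_def using assms(3) by simp
qed

lemma cross:
  assumes a1: "all_accept A (GV m k) (GE m k x1 y1) c1" and a2: "all_accept A (GV m k) (GE m k x2 y2) c2"
    and agree: "\<And>s. s \<in> Sset m k \<Longrightarrow> inS m k s \<Longrightarrow> c1 (iota m k s) = c2 (iota m k s)"
  shows "all_accept A (GV m k) (GE m k x1 y2) (\<lambda>u. if tg (hh m k u) = 2 then c2 u else c1 u)"
  unfolding all_accept_def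
proof
  fix u assume u: "u \<in> GV m k"
  define cH where "cH u = (if tg (hh m k u) = 2 then c2 u else c1 u)" for u
  have cH: "(\<lambda>u. if tg (hh m k u) = 2 then c2 u else c1 u) = cH" by (simp add: cH_def fun_eq_iff)
  define s where "s = hh m k u"
  have iS: "inS m k s" using hh_inS[OF u] by (simp add: s_def)
  have agw: "\<And>w. w \<in> GV m k \<Longrightarrow> hh m k w \<in> Sset m k \<Longrightarrow> c1 w = c2 w"
    using agree hh_inS iota_hh by metis
  have GEw: "\<And>w xa ya. GE m k xa ya u w \<Longrightarrow> w \<in> GV m k \<and> sadj xa ya s (hh m k w)"
    by (simp add: GE_def s_def)
  have "A (local_view (GE m k x1 y2) cH u)"
  proof -
    consider "tg s = 0" | "tg s = 1" | "tg s = 2" using tg_cases[of s] by metis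
    then show ?thesis
    proof cases
      case 1
      have "local_view (GE m k x1 y2) cH u = local_view (GE m k x1 y1) c1 u"
      proof (rule lv_eq)
        fix w show "GE m k x1 y2 u w = GE m k x1 y1 u w"
        proof (cases "w \<in> GV m k")
          case True
          show ?thesis unfolding GE_def s_def[symmetric]
            using C_indep[OF iS 1 hh_inS[OF True], of x1 y2 x1 y1] by simp
        qed (simp add: GE_def)
      next
        fix w assume e: "GE m k x1 y2 u w"
        then have w: "w \<in> GV m k" and ad: "sadj x1 y2 s (hh m k w)" using GEw by auto
        show "cH w = c1 w"
        proof (cases "tg (hh m k w) = 2")
          case True
          then have "hh m k w = FR 2 5 \<or> hh m k w = FR 2 6" using C_R[OF iS 1 hh_inS[OF w] True ad] by simp
          then have "hh m k w \<in> Sset m k" by (auto simp: Sset_def)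
          then show ?thesis using agw[OF w] True by (simp add: cH_def)
        qed (simp add: cH_def)
      next
        show "cH u = c1 u" using 1 by (simp add: cH_def s_def)
      qed
      then show ?thesis using a1 u by (simp add: all_accept_def)
    next
      case 2
      have "local_view (GE m k x1 y2) cH u = local_view (GE m k x1 y1) c1 u"
      proof (rule lv_eq)
        fix w show "GE m k x1 y2 u w = GE m k x1 y1 u w"
          unfolding GE_def s_def[symmetric] using sadj_y1[OF 2, of x1 y2 _ y1] by simp
      next
        fix w assume e: "GE m k x1 y2 u w"
        then have ad: "sadj x1 y2 s (hh m k w)" using GEw by auto
        then have "tg (hh m k w) \<noteq> 2" using 2 by (auto simp: sadj_def)
        then show "cH w = c1 w" by (simp add: cH_def)
      next
        show "cH u = c1 u" using 2 by (simp add: cH_def s_def)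
      qed
      then show ?thesis using a1 u by (simp add: all_accept_def)
    next
      case 3
      have "local_view (GE m k x1 y2) cH u = local_view (GE m k x2 y2) c2 u"
      proof (rule lv_eq)
        fix w show "GE m k x1 y2 u w = GE m k x2 y2 u w"
          unfolding GE_def s_def[symmetric] using sadj_x2[OF 3, of x1 y2 _ x2] by simp
      next
        fix w assume e: "GE m k x1 y2 u w"
        then have w: "w \<in> GV m k" and ad: "sadj x1 y2 s (hh m k w)" using GEw by auto
        then have n1: "tg (hh m k w) \<noteq> 1" using 3 by (auto simp: sadj_def)
        show "cH w = c2 w"
        proof (cases "tg (hh m k w) = 2")
          case False
          then have "tg (hh m k w) = 0" using n1 tg_cases by blast
          then have "hh m k w \<in> Sset m k" using hh_inS[OF w] by (simp add: Sset_def)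
          then show ?thesis using agw[OF w] False by (simp add: cH_def)
        qed (simp add: cH_def)
      next
        show "cH u = c2 u" using 3 by (simp add: cH_def s_def)
      qed
      then show ?thesis using a2 u by (simp add: all_accept_def)
    qed
  qed
  then show "A (local_view (GE m k x1 y2) (\<lambda>u. if tg (hh m k u) = 2 then c2 u else c1 u) u)"
    by (simp only: cH)
qed

lemma Sset_sub: "Sset m k \<subseteq> (\<lambda>(a, b). FC a b) ` ({0..1} \<times> {0..6}) \<union> {FR 2 5, FR 2 6}"
proof
  fix s assume "s \<in> Sset m k"
  then show "s \<in> (\<lambda>(a, b). FC a b) ` ({0..1} \<times> {0..6}) \<union> {FR 2 5, FR 2 6}"
    unfolding Sset_def by (cases s) (auto simp: image_iff)
qed

lemma Sset_fin: "finite (Sset m k)"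
  by (rule finite_subset[OF Sset_sub]) auto

lemma Sset_card: "card (Sset m k) \<le> 16"
proof -
  have "card (Sset m k) \<le> card ((\<lambda>(a, b). FC a b) ` ({0..1::int} \<times> {0..6::int}) \<union> {FR 2 5, FR 2 6})"
    by (rule card_mono[OF _ Sset_sub]) auto
  also have "\<dots> \<le> card ((\<lambda>(a, b). FC a b) ` ({0..1::int} \<times> {0..6::int})) + card {FR 2 5, FR 2 6}"
    by (rule card_Un_le)
  also have "card ((\<lambda>(a, b). FC a b) ` ({0..1::int} \<times> {0..6::int})) \<le> 14"
    using card_image_le[of "{0..1::int} \<times> {0..6::int}" "\<lambda>(a, b). FC a b"] by (simp add: card_cartesian_product)
  finally show ?thesis by simp
qed

lemma sum_pow2: "(\<Sum>i\<le>K. (2::nat) ^ i) < 2 ^ Suc K"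
  by (induction K) auto

lemma lower:
  assumes c1: "c \<ge> 1" and Cind: "\<And>V E. grid_induced_subgraph V E \<Longrightarrow> C V E"
    and Csub: "\<And>V E. C V E \<Longrightarrow> grid_subgraph V E"
    and pls: "is_pls c C A" and m1: "m \<ge> 1"
    and bnd: "\<And>V E. admissible c V E \<Longrightarrow> C V E \<Longrightarrow> card V = NS m k \<Longrightarrow>
       \<exists>cert. all_accept A V E cert \<and> (\<forall>v\<in>V. length (cert v) \<le> K)"
  shows "m \<le> 16 * (K + 1)"
proof -
  define X where "X xs = (\<lambda>i. xs ! i)" for xs :: "bool list"
  define Y where "Y xs = (\<lambda>i. \<not> xs ! i)" for xs :: "bool list"
  have ex: "\<exists>cert. all_accept A (GV m k) (GE m k (X xs) (Y xs)) cert \<and> (\<forall>v\<in>GV m k. length (cert v) \<le> K)" for xs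
  proof (rule bnd)
    show "admissible c (GV m k) (GE m k (X xs) (Y xs))" by (rule adm[OF c1])
    show "C (GV m k) (GE m k (X xs) (Y xs))" by (rule Cind, rule yes_inst) (simp add: X_def Y_def)
    show "card (GV m k) = NS m k" by (rule card_GV)
  qed
  define cf where "cf xs = (SOME cert. all_accept A (GV m k) (GE m k (X xs) (Y xs)) cert \<and>
      (\<forall>v\<in>GV m k. length (cert v) \<le> K))" for xs
  have cf: "all_accept A (GV m k) (GE m k (X xs) (Y xs)) (cf xs) \<and> (\<forall>v\<in>GV m k. length (cf xs v) \<le> K)" for xs
    unfolding cf_def by (rule someI_ex[OF ex])
  define kf where "kf xs = restrict (\<lambda>s. cf xs (iota m k s)) (Sset m k)" for xs
  define L where "L = {xs :: bool list. set xs \<subseteq> UNIV \<and> length xs = m}"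
  define B where "B = {w :: bool list. set w \<subseteq> UNIV \<and> length w \<le> K}"
  have SsetSig: "\<And>s. s \<in> Sset m k \<Longrightarrow> s \<in> Sig m k"
    using m1 by (auto simp: Sset_def Sig_def Lm_def)
  have noacc: "\<not> all_accept A (GV m k) (GE m k x y) cert" if "i < m" "x i" "y i" for x y cert i
  proof -
    have "\<not> C (GV m k) (GE m k x y)" using no_inst[of i m x y k] that Csub by blast
    then show ?thesis using pls adm[OF c1] unfolding is_pls_def by blast
  qed
  have inj: "inj_on kf L"
  proof (rule inj_onI)
    fix xs xs' assume xs: "xs \<in> L" and xs': "xs' \<in> L" and eq: "kf xs = kf xs'"
    have ag: "cf xs (iota m k s) = cf xs' (iota m k s)" if "s \<in> Sset m k" for s
    proof -
      have "kf xs s = kf xs' s" using eq by simp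
      then show ?thesis using that by (simp add: kf_def)
    qed
    show "xs = xs'"
    proof (rule ccontr)
      assume ne: "xs \<noteq> xs'"
      have lens: "length xs = m" "length xs' = m" using xs xs' by (auto simp: L_def)
      have "\<exists>i<m. xs ! i \<noteq> xs' ! i"
      proof (rule ccontr)
        assume "\<not> (\<exists>i<m. xs ! i \<noteq> xs' ! i)"
        then have "xs = xs'" using lens by (intro nth_equalityI) auto
        then show False using ne by simp
      qed
      then obtain i where i: "i < m" "xs ! i \<noteq> xs' ! i" by blast
      show False
      proof (cases "xs ! i")
        case True
        have "all_accept A (GV m k) (GE m k (X xs) (Y xs'))
              (\<lambda>u. if tg (hh m k u) = 2 then cf xs' u else cf xs u)"
          by (rule cross[OF conjunct1[OF cf] conjunct1[OF cf]]) (rule ag)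
        moreover have "X xs i" "Y xs' i" using True i by (auto simp: X_def Y_def)
        ultimately show False using noacc i(1) by blast
      next
        case False
        have "all_accept A (GV m k) (GE m k (X xs') (Y xs))
              (\<lambda>u. if tg (hh m k u) = 2 then cf xs u else cf xs' u)"
          by (rule cross[OF conjunct1[OF cf] conjunct1[OF cf]]) (rule ag[symmetric])
        moreover have "X xs' i" "Y xs i" using False i by (auto simp: X_def Y_def)
        ultimately show False using noacc i(1) by blast
      qed
    qed
  qed
  have sub: "kf ` L \<subseteq> (\<Pi>\<^sub>E s\<in>Sset m k. B)"
  proof
    fix z assume "z \<in> kf ` L"
    then obtain xs where z: "z = kf xs" by blast
    show "z \<in> (\<Pi>\<^sub>E s\<in>Sset m k. B)"
    proof (rule PiE_I)
      fix s assume s: "s \<in> Sset m k"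
      then have "iota m k s \<in> GV m k" using iota_in SsetSig by blast
      then have "length (cf xs (iota m k s)) \<le> K" using cf by blast
      then show "z s \<in> B" using s by (simp add: z kf_def B_def)
    next
      fix s assume "s \<notin> Sset m k"
      then show "z s = undefined" by (simp add: z kf_def)
    qed
  qed
  have finB: "finite B" unfolding B_def by (rule finite_lists_length_le) simp
  have finP: "finite (\<Pi>\<^sub>E s\<in>Sset m k. B)" using finB Sset_fin by (simp add: finite_PiE)
  have cL: "card L = 2 ^ m" unfolding L_def using card_lists_length_eq[of "UNIV :: bool set" m] by simp
  have cB: "card B < 2 ^ Suc K"
    unfolding B_def using card_lists_length_le[of "UNIV :: bool set" K] sum_pow2[of K] by simp
  have cP: "card (\<Pi>\<^sub>E s\<in>Sset m k. B) = card B ^ card (Sset m k)"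
    using card_PiE[OF Sset_fin[of m k], where T = "\<lambda>_. B"] by simp
  have "2 ^ m \<le> card (\<Pi>\<^sub>E s\<in>Sset m k. B)"
    using card_inj_on_le[OF inj sub finP] cL by simp
  also have "\<dots> \<le> (2 ^ Suc K) ^ card (Sset m k)"
    unfolding cP using cB by (intro power_mono) auto
  also have "\<dots> \<le> (2 ^ Suc K) ^ 16"
    using Sset_card by (intro power_increasing) auto
  also have "\<dots> = 2 ^ (16 * (K + 1))"
    by (metis Suc_eq_plus1 mult.commute power_mult)
  finally have "(2::nat) ^ m \<le> 2 ^ (16 * (K + 1))" .
  then show ?thesis by (rule power_le_imp_le_exp[rotated]) simp
qed

lemma ind_sub: "grid_induced_subgraph V E \<Longrightarrow> grid_subgraph V E"
  unfolding grid_induced_subgraph_def grid_subgraph_def by blast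

lemma scheme_compl:
  assumes c1: "c \<ge> 1"
    and CS: "\<And>V E. C V E \<longleftrightarrow> (if ind then grid_induced_subgraph V E else grid_subgraph V E)"
    and ad: "admissible c V E" and CVE: "C V E"
  shows "\<exists>cert. all_accept (acc ind) V E cert \<and> (\<forall>v\<in>V. length (cert v) \<le> (12 + 2 * c) * card V)"
proof (cases ind)
  case True
  then have "grid_induced_subgraph V E" using CS CVE by simp
  then obtain f where f: "inj_on f V" "\<forall>u\<in>V. \<forall>v\<in>V. E u v \<longleftrightarrow> grid_adj (f u) (f v)"
    unfolding grid_induced_subgraph_def by blast
  show ?thesis by (rule completeness[OF ad f(1) _ _ c1]) (use f(2) in auto)
next
  case False
  then have "grid_subgraph V E" using CS CVE by simp
  then obtain f where f: "inj_on f V" "\<forall>u\<in>V. \<forall>v\<in>V. E u v \<longrightarrow> grid_adj (f u) (f v)"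
    unfolding grid_subgraph_def by blast
  show ?thesis by (rule completeness[OF ad f(1) _ _ c1]) (use f(2) False in auto)
qed

lemma scheme_pls:
  assumes c1: "c \<ge> 1"
    and CS: "\<And>V E. C V E \<longleftrightarrow> (if ind then grid_induced_subgraph V E else grid_subgraph V E)"
  shows "is_pls c C (acc ind)"
  unfolding is_pls_def
proof (intro conjI allI impI)
  fix V E assume "admissible c V E \<and> C V E"
  then show "\<exists>cert. all_accept (acc ind) V E cert" using scheme_compl[OF c1 CS] by blast
next
  fix V E cert assume a: "admissible c V E \<and> \<not> C V E"
  show "\<not> all_accept (acc ind) V E cert"
  proof
    assume "all_accept (acc ind) V E cert"
    then have "grid_subgraph V E \<and> (ind \<longrightarrow> grid_induced_subgraph V E)" using soundness a by blast
    then have "C V E" using CS by simp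
    then show False using a by blast
  qed
qed

lemma lc_prop:
  assumes c1: "c \<ge> 1"
    and CS: "\<And>V E. C V E \<longleftrightarrow> (if ind then grid_induced_subgraph V E else grid_subgraph V E)"
  shows "(\<exists>A. is_pls c C A \<and> (\<forall>V E. admissible c V E \<and> C V E \<and> card V = n \<longrightarrow>
        (\<exists>cert. all_accept A V E cert \<and> (\<forall>v\<in>V. length (cert v) \<le> (12 + 2 * c) * n))))"
    (is ?P1)
  and "local_complexity c C n \<le> (12 + 2 * c) * n"
  and "\<exists>A. is_pls c C A \<and> (\<forall>V E. admissible c V E \<and> C V E \<and> card V = n \<longrightarrow>
        (\<exists>cert. all_accept A V E cert \<and> (\<forall>v\<in>V. length (cert v) \<le> local_complexity c C n)))"
proof -
  show P1: ?P1
    using scheme_pls[OF c1 CS] scheme_compl[OF c1 CS] by blast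
  show "local_complexity c C n \<le> (12 + 2 * c) * n"
    unfolding local_complexity_def by (rule Least_le) (rule P1)
  show "\<exists>A. is_pls c C A \<and> (\<forall>V E. admissible c V E \<and> C V E \<and> card V = n \<longrightarrow>
        (\<exists>cert. all_accept A V E cert \<and> (\<forall>v\<in>V. length (cert v) \<le> local_complexity c C n)))"
    unfolding local_complexity_def by (rule LeastI_ex) (rule exI, rule P1)
qed

lemma lc_ge:
  assumes c1: "c \<ge> 1"
    and CS: "\<And>V E. C V E \<longleftrightarrow> (if ind then grid_induced_subgraph V E else grid_subgraph V E)"
    and n70: "n \<ge> 70"
  shows "n div 30 \<le> 16 * (local_complexity c C n + 1)"
proof -
  define m where "m = n div 30"
  have m1: "m \<ge> 1" using n70 by (simp add: m_def)
  have "30 * m \<le> n" by (simp add: m_def)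
  then have le: "card (Sig m 0) \<le> n" using Sig_card0[of m] n70 by linarith
  define k where "k = n - card (Sig m 0)"
  have NSn: "NS m k = n" using le Sig_card[of m k] by (simp add: NS_def k_def)
  obtain A where A: "is_pls c C A" and bA: "\<forall>V E. admissible c V E \<and> C V E \<and> card V = n \<longrightarrow>
        (\<exists>cert. all_accept A V E cert \<and> (\<forall>v\<in>V. length (cert v) \<le> local_complexity c C n))"
    using lc_prop(3)[OF c1 CS] by blast
  have Cind: "\<And>V E. grid_induced_subgraph V E \<Longrightarrow> C V E" using CS ind_sub by simp
  have Csub: "\<And>V E. C V E \<Longrightarrow> grid_subgraph V E" using CS ind_sub by (simp split: if_splits)
  show ?thesis unfolding m_def[symmetric]
    by (rule lower[OF c1 Cind Csub A m1, of k]) (use bA NSn in auto)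
qed

lemma theta:
  assumes c1: "c \<ge> 1"
    and CS: "\<And>V E. C V E \<longleftrightarrow> (if ind then grid_induced_subgraph V E else grid_subgraph V E)"
  shows "(\<lambda>n. real (local_complexity c C n)) \<in> \<Theta>(\<lambda>n. real n)"
proof (rule bigthetaI'[of "1 / 1000" "real (12 + 2 * c)"])
  show "(0::real) < 1 / 1000" by simp
  show "0 < real (12 + 2 * c)" by simp
  show "\<forall>\<^sub>F n in at_top. 1 / 1000 * norm (real n) \<le> norm (real (local_complexity c C n)) \<and>
      norm (real (local_complexity c C n)) \<le> real (12 + 2 * c) * norm (real n)"
    unfolding eventually_at_top_linorder
  proof (intro exI allI impI)
    fix n :: nat assume n: "n \<ge> 10000"
    define L where "L = local_complexity c C n"
    have up: "L \<le> (12 + 2 * c) * n" using lc_prop(2)[OF c1 CS] by (simp add: L_def)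
    have lo: "n div 30 \<le> 16 * (L + 1)" using lc_ge[OF c1 CS] n by (simp add: L_def)
    define q where "q = n div 30"
    define r where "r = n mod 30"
    have "n = 30 * q + r" by (simp add: q_def r_def)
    moreover have "r < 30" by (simp add: r_def)
    moreover have "q \<le> 16 * (L + 1)" using lo by (simp add: q_def)
    ultimately have "n \<le> 480 * L + 510" by presburger
    then have "real n \<le> 480 * real L + 510" by (metis of_nat_add of_nat_le_iff of_nat_mult of_nat_numeral)
    then have r1: "1 / 1000 * real n \<le> real L" using n by simp
    have r2: "real L \<le> real (12 + 2 * c) * real n" using up by (metis of_nat_le_iff of_nat_mult)
    show "1 / 1000 * norm (real n) \<le> norm (real (local_complexity c C n)) \<and>
      norm (real (local_complexity c C n)) \<le> real (12 + 2 * c) * norm (real n)"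
      using r1 r2 by (simp add: L_def)
  qed
qed

theorem theorem5p7:
  fixes c :: nat
  assumes "c \<ge> 1"
  shows "(\<lambda>n. real (local_complexity c grid_subgraph n)) \<in> \<Theta>(\<lambda>n. real n) \<and>
         (\<lambda>n. real (local_complexity c grid_induced_subgraph n)) \<in> \<Theta>(\<lambda>n. real n)"
proof
  show "(\<lambda>n. real (local_complexity c grid_subgraph n)) \<in> \<Theta>(\<lambda>n. real n)"
    by (rule theta[OF assms, of _ False]) simp
  show "(\<lambda>n. real (local_complexity c grid_induced_subgraph n)) \<in> \<Theta>(\<lambda>n. real n)"
    by (rule theta[OF assms, of _ True]) simp
qed

end
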